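(* Let $G$ and $G'$ be finite groups. Then $G$ and $G'$ are both almost monomial if and only if the direct product $G\times G'$ is almost monomial.
   Context: A finite group $G$ is called almost monomial if for every two distinct complex irreducible characters $\chi$ and $\psi$ of $G$ there exist a subgroup $H\le G$ and a linear (degree one) character $\varphi$ of $H$ such that the induced character $\operatorname{Ind}_H^G\varphi$ contains $\chi$ (i.e. $\langle \operatorname{Ind}_H^G\varphi,\chi\rangle\neq 0$) and does not contain $\psi$ (i.e. $\langle \operatorname{Ind}_H^G\varphi,\psi\rangle=0$), where $\langle\,,\rangle$ is the usual inner product of class functions. *)

theory Defs
  imports "HOL-Algebra.Algebra" "Jordan_Normal_Form.Matrix"
begin

definition is_rep :: "('a, 'b) monoid_scheme \<Rightarrow> nat \<Rightarrow> ('a \<Rightarrow> complex mat) \<Rightarrow> bool" where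
  "is_rep G n \<rho> \<longleftrightarrow>
     (\<forall>g\<in>carrier G. \<rho> g \<in> carrier_mat n n) \<and>
     \<rho> \<one>\<^bsub>G\<^esub> = 1\<^sub>m n \<and>
     (\<forall>x\<in>carrier G. \<forall>y\<in>carrier G. \<rho> (x \<otimes>\<^bsub>G\<^esub> y) = \<rho> x * \<rho> y)"

definition invariant_subspace :: "('a, 'b) monoid_scheme \<Rightarrow> nat \<Rightarrow> ('a \<Rightarrow> complex mat) \<Rightarrow> complex vec set \<Rightarrow> bool" where
  "invariant_subspace G n \<rho> W \<longleftrightarrow>
     W \<subseteq> carrier_vec n \<and> 0\<^sub>v n \<in> W \<and>
     (\<forall>v\<in>W. \<forall>w\<in>W. v + w \<in> W) \<and>
     (\<forall>c. \<forall>v\<in>W. c \<cdot>\<^sub>v v \<in> W) \<and>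
     (\<forall>g\<in>carrier G. \<forall>v\<in>W. \<rho> g *\<^sub>v v \<in> W)"

definition irreducible_rep :: "('a, 'b) monoid_scheme \<Rightarrow> nat \<Rightarrow> ('a \<Rightarrow> complex mat) \<Rightarrow> bool" where
  "irreducible_rep G n \<rho> \<longleftrightarrow> n > 0 \<and> is_rep G n \<rho> \<and>
     (\<forall>W. invariant_subspace G n \<rho> W \<longrightarrow> W = {0\<^sub>v n} \<or> W = carrier_vec n)"

definition mat_trace :: "complex mat \<Rightarrow> complex" where
  "mat_trace A = (\<Sum>i<dim_row A. A $$ (i, i))"

text \<open>Class functions are functions on the carrier, taken to be 0 outside it.\<close>
definition irr_char :: "('a, 'b) monoid_scheme \<Rightarrow> ('a \<Rightarrow> complex) \<Rightarrow> bool" where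
  "irr_char G \<chi> \<longleftrightarrow> (\<exists>n \<rho>. irreducible_rep G n \<rho> \<and>
     \<chi> = (\<lambda>g. if g \<in> carrier G then mat_trace (\<rho> g) else 0))"

definition linear_char :: "('a, 'b) monoid_scheme \<Rightarrow> 'a set \<Rightarrow> ('a \<Rightarrow> complex) \<Rightarrow> bool" where
  "linear_char G H \<phi> \<longleftrightarrow> (\<forall>h\<in>H. \<phi> h \<noteq> 0) \<and>
     (\<forall>x\<in>H. \<forall>y\<in>H. \<phi> (x \<otimes>\<^bsub>G\<^esub> y) = \<phi> x * \<phi> y)"

definition induced :: "('a, 'b) monoid_scheme \<Rightarrow> 'a set \<Rightarrow> ('a \<Rightarrow> complex) \<Rightarrow> 'a \<Rightarrow> complex" where
  "induced G H \<phi> g = (if g \<in> carrier G then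
     (\<Sum>x\<in>carrier G. (if x \<otimes>\<^bsub>G\<^esub> g \<otimes>\<^bsub>G\<^esub> inv\<^bsub>G\<^esub> x \<in> H
        then \<phi> (x \<otimes>\<^bsub>G\<^esub> g \<otimes>\<^bsub>G\<^esub> inv\<^bsub>G\<^esub> x) else 0)) / of_nat (card H)
     else 0)"

definition char_inner :: "('a, 'b) monoid_scheme \<Rightarrow> ('a \<Rightarrow> complex) \<Rightarrow> ('a \<Rightarrow> complex) \<Rightarrow> complex" where
  "char_inner G \<alpha> \<beta> = (\<Sum>g\<in>carrier G. \<alpha> g * cnj (\<beta> g)) / of_nat (card (carrier G))"

definition almost_monomial :: "('a, 'b) monoid_scheme \<Rightarrow> bool" where
  "almost_monomial G \<longleftrightarrow>
     (\<forall>\<chi> \<psi>. irr_char G \<chi> \<and> irr_char G \<psi> \<and> \<chi> \<noteq> \<psi> \<longrightarrow>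
        (\<exists>H \<phi>. subgroup H G \<and> linear_char G H \<phi> \<and>
           char_inner G (induced G H \<phi>) \<chi> \<noteq> 0 \<and>
           char_inner G (induced G H \<phi>) \<psi> = 0))"

end

theory Submission
  imports Defs "Jordan_Normal_Form.Spectral_Radius"
begin

lemma mult_entry:
  assumes "A \<in> carrier_mat n m" "B \<in> carrier_mat m p" "i < n" "j < p"
  shows "(A * B) $$ (i,j) = (\<Sum>k<m. A $$ (i,k) * B $$ (k,j))"
  using assms by (simp add: scalar_prod_def atLeast0LessThan)

lemma mult_vec_entry:
  assumes "A \<in> carrier_mat n m" "v \<in> carrier_vec m" "i < n"
  shows "(A *\<^sub>v v) $ i = (\<Sum>k<m. A $$ (i,k) * v $ k)"
  using assms by (simp add: scalar_prod_def atLeast0LessThan)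

lemma mat_trace_comm:
  assumes "A \<in> carrier_mat n m" "B \<in> carrier_mat m n"
  shows "mat_trace (A * B) = mat_trace (B * A)"
proof -
  have "mat_trace (A * B) = (\<Sum>i<n. \<Sum>k<m. A $$ (i,k) * B $$ (k,i))"
    using assms by (simp add: mat_trace_def scalar_prod_def atLeast0LessThan)
  also have "\<dots> = (\<Sum>k<m. \<Sum>i<n. B $$ (k,i) * A $$ (i,k))"
    by (subst sum.swap) (simp add: mult.commute)
  also have "\<dots> = mat_trace (B * A)"
    using assms by (simp add: mat_trace_def scalar_prod_def atLeast0LessThan)
  finally show ?thesis .
qed

lemma mat_trace_one[simp]: "mat_trace (1\<^sub>m n) = of_nat n"
  by (simp add: mat_trace_def)

lemma rep_carrier: "is_rep G n \<rho> \<Longrightarrow> g \<in> carrier G \<Longrightarrow> \<rho> g \<in> carrier_mat n n"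
  by (simp add: is_rep_def)

lemma schur:
  assumes irr: "irreducible_rep G d \<sigma>" and M: "M \<in> carrier_mat d d"
    and comm: "\<And>g. g \<in> carrier G \<Longrightarrow> M * \<sigma> g = \<sigma> g * M"
  shows "\<exists>c. M = c \<cdot>\<^sub>m 1\<^sub>m d"
proof -
  from irr have d: "d > 0" and rep: "is_rep G d \<sigma>"
    and irrW: "\<And>W. invariant_subspace G d \<sigma> W \<Longrightarrow> W = {0\<^sub>v d} \<or> W = carrier_vec d"
    by (auto simp: irreducible_rep_def)
  from spectrum_non_empty[OF M d] obtain c where "eigenvalue M c"
    unfolding spectrum_def by auto
  then obtain v where ev: "eigenvector M v c" unfolding eigenvalue_def by auto
  with M have v: "v \<in> carrier_vec d" "v \<noteq> 0\<^sub>v d" "M *\<^sub>v v = c \<cdot>\<^sub>v v"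
    unfolding eigenvector_def by auto
  define W where "W = {w \<in> carrier_vec d. M *\<^sub>v w = c \<cdot>\<^sub>v w}"
  have "invariant_subspace G d \<sigma> W"
    unfolding invariant_subspace_def
  proof (intro conjI ballI allI)
    show "W \<subseteq> carrier_vec d" by (auto simp: W_def)
    show "0\<^sub>v d \<in> W" using M by (auto simp: W_def)
    fix x y assume "x \<in> W" "y \<in> W"
    then show "x + y \<in> W" using M
      by (auto simp: W_def mult_add_distrib_mat_vec smult_add_distrib_vec[of _ d])
  next
    fix a x assume "x \<in> W"
    then show "a \<cdot>\<^sub>v x \<in> W" using M
      by (auto simp: W_def mult_mat_vec smult_smult_assoc mult.commute)
  next
    fix g x assume g: "g \<in> carrier G" and x: "x \<in> W"
    have sg: "\<sigma> g \<in> carrier_mat d d" using rep g by (simp add: is_rep_def)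
    have "M *\<^sub>v (\<sigma> g *\<^sub>v x) = (M * \<sigma> g) *\<^sub>v x" using M sg x by (simp add: W_def)
    also have "\<dots> = (\<sigma> g * M) *\<^sub>v x" using comm g by simp
    also have "\<dots> = \<sigma> g *\<^sub>v (c \<cdot>\<^sub>v x)" using M sg x by (simp add: W_def)
    also have "\<dots> = c \<cdot>\<^sub>v (\<sigma> g *\<^sub>v x)" using sg x by (simp add: W_def mult_mat_vec)
    finally show "\<sigma> g *\<^sub>v x \<in> W" using sg x by (simp add: W_def)
  qed
  moreover have "W \<noteq> {0\<^sub>v d}" using v by (auto simp: W_def)
  ultimately have WW: "W = carrier_vec d" using irrW by blast
  have "M = c \<cdot>\<^sub>m 1\<^sub>m d"
  proof (rule eq_matI)
    fix i j assume ij: "i < dim_row (c \<cdot>\<^sub>m 1\<^sub>m d)" "j < dim_col (c \<cdot>\<^sub>m 1\<^sub>m d)"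
    then have i: "i < d" and j: "j < d" by auto
    have "unit_vec d j \<in> W" using WW by simp
    then have "M *\<^sub>v unit_vec d j = c \<cdot>\<^sub>v unit_vec d j" by (simp add: W_def)
    then have "(M *\<^sub>v unit_vec d j) $ i = (c \<cdot>\<^sub>v unit_vec d j) $ i" by simp
    moreover have "(M *\<^sub>v unit_vec d j) $ i = M $$ (i,j)"
      using M i j by (simp add: mult_vec_entry[OF M] if_distrib[of "\<lambda>x. _ * x"] cong: if_cong)
    ultimately show "M $$ (i, j) = (c \<cdot>\<^sub>m 1\<^sub>m d) $$ (i, j)" using i j by auto
  qed (use M in auto)
  then show ?thesis by blast
qed

lemma (in group) bij_lmult: "h \<in> carrier G \<Longrightarrow> bij_betw (\<lambda>g. h \<otimes> g) (carrier G) (carrier G)"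
  by (rule bij_betwI[where g="\<lambda>g. inv h \<otimes> g"]) (auto simp: m_assoc[symmetric])

lemma (in group) bij_rmult: "h \<in> carrier G \<Longrightarrow> bij_betw (\<lambda>g. g \<otimes> h) (carrier G) (carrier G)"
  by (rule bij_betwI[where g="\<lambda>g. g \<otimes> inv h"]) (auto simp: m_assoc)

lemma (in group) bij_conj: "x \<in> carrier G \<Longrightarrow> bij_betw (\<lambda>g. x \<otimes> g \<otimes> inv x) (carrier G) (carrier G)"
proof (rule bij_betwI[where g="\<lambda>g. inv x \<otimes> g \<otimes> x"])
  assume x: "x \<in> carrier G"
  show "(\<lambda>g. x \<otimes> g \<otimes> inv x) \<in> carrier G \<rightarrow> carrier G" "(\<lambda>g. inv x \<otimes> g \<otimes> x) \<in> carrier G \<rightarrow> carrier G"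
    using x by auto
  fix y assume y: "y \<in> carrier G"
  show "inv x \<otimes> (x \<otimes> y \<otimes> inv x) \<otimes> x = y" "x \<otimes> (inv x \<otimes> y \<otimes> x) \<otimes> inv x = y"
    using x y by (metis m_assoc l_inv r_inv l_one r_one inv_closed m_closed)+
qed

lemma (in group) sum_lmult: "h \<in> carrier G \<Longrightarrow> (\<Sum>g\<in>carrier G. f (h \<otimes> g)) = (\<Sum>g\<in>carrier G. f g)"
  using sum.reindex_bij_betw[OF bij_lmult] by blast

lemma (in group) sum_rmult: "h \<in> carrier G \<Longrightarrow> (\<Sum>g\<in>carrier G. f (g \<otimes> h)) = (\<Sum>g\<in>carrier G. f g)"
  using sum.reindex_bij_betw[OF bij_rmult] by blast

lemma (in group) sum_conj: "x \<in> carrier G \<Longrightarrow> (\<Sum>g\<in>carrier G. f (x \<otimes> g \<otimes> inv x)) = (\<Sum>g\<in>carrier G. f g)"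
  using sum.reindex_bij_betw[OF bij_conj] by blast

lemma rep_entry:
  assumes "is_rep G n \<rho>" "x \<in> carrier G" "y \<in> carrier G" "i < n" "j < n"
  shows "\<rho> (x \<otimes>\<^bsub>G\<^esub> y) $$ (i,j) = (\<Sum>a<n. \<rho> x $$ (i,a) * \<rho> y $$ (a,j))"
proof -
  have "\<rho> (x \<otimes>\<^bsub>G\<^esub> y) = \<rho> x * \<rho> y" "\<rho> x \<in> carrier_mat n n" "\<rho> y \<in> carrier_mat n n"
    using assms unfolding is_rep_def by auto
  then show ?thesis using mult_entry[of "\<rho> x" n n "\<rho> y" n i j] assms by simp
qed

lemma (in group) rep_inv_mult:
  assumes "is_rep G n \<rho>" "g \<in> carrier G"
  shows "\<rho> (inv g) * \<rho> g = 1\<^sub>m n" "\<rho> g * \<rho> (inv g) = 1\<^sub>m n"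
proof -
  have "\<rho> (inv g) * \<rho> g = \<rho> (inv g \<otimes> g)" "\<rho> g * \<rho> (inv g) = \<rho> (g \<otimes> inv g)"
    using assms(1) inv_closed[OF assms(2)] assms(2) unfolding is_rep_def by metis+
  moreover have "\<rho> \<one> = 1\<^sub>m n" using assms by (simp add: is_rep_def)
  ultimately show "\<rho> (inv g) * \<rho> g = 1\<^sub>m n" "\<rho> g * \<rho> (inv g) = 1\<^sub>m n"
    using assms(2) by simp_all
qed

lemma (in group) schur_orth:
  assumes fin: "finite (carrier G)" and irr: "irreducible_rep G d \<sigma>"
    and ijkl: "i < d" "j < d" "k < d" "l < d"
  shows "(\<Sum>g\<in>carrier G. \<sigma> g $$ (i,j) * \<sigma> (inv g) $$ (k,l)) =
         (if i = l \<and> j = k then of_nat (card (carrier G)) / of_nat d else 0)"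
proof -
  from irr have d: "d > 0" and rep: "is_rep G d \<sigma>" by (auto simp: irreducible_rep_def)
  have sc: "\<And>g. g \<in> carrier G \<Longrightarrow> \<sigma> g \<in> carrier_mat d d" using rep by (simp add: is_rep_def)
  define M where "M = mat d d (\<lambda>(i,l). \<Sum>g\<in>carrier G. \<sigma> g $$ (i,j) * \<sigma> (inv g) $$ (k,l))"
  have M: "M \<in> carrier_mat d d" by (simp add: M_def)
  have comm: "M * \<sigma> h = \<sigma> h * M" if h: "h \<in> carrier G" for h
  proof (rule eq_matI)
    fix i l assume "i < dim_row (\<sigma> h * M)" "l < dim_col (\<sigma> h * M)"
    then have i: "i < d" and l: "l < d" using sc[OF h] M by auto
    have "(\<sigma> h * M) $$ (i,l) = (\<Sum>a<d. \<sigma> h $$ (i,a) * (\<Sum>g\<in>carrier G. \<sigma> g $$ (a,j) * \<sigma> (inv g) $$ (k,l)))"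
      using i l sc[OF h] M by (simp add: scalar_prod_def atLeast0LessThan M_def)
    also have "\<dots> = (\<Sum>g\<in>carrier G. (\<Sum>a<d. \<sigma> h $$ (i,a) * \<sigma> g $$ (a,j)) * \<sigma> (inv g) $$ (k,l))"
      by (simp add: sum_distrib_left sum_distrib_right mult.assoc) (rule sum.swap)
    also have "\<dots> = (\<Sum>g\<in>carrier G. \<sigma> (h \<otimes> g) $$ (i,j) * \<sigma> (inv g) $$ (k,l))"
      using rep_entry[OF rep h _ i ijkl(2)] by simp
    also have "\<dots> = (\<Sum>g\<in>carrier G. \<sigma> (h \<otimes> (inv h \<otimes> g)) $$ (i,j) * \<sigma> (inv (inv h \<otimes> g)) $$ (k,l))"
      using sum_lmult[OF inv_closed[OF h], of "\<lambda>g. \<sigma> (h \<otimes> g) $$ (i,j) * \<sigma> (inv g) $$ (k,l)"] by simp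
    also have "\<dots> = (\<Sum>g\<in>carrier G. \<sigma> g $$ (i,j) * \<sigma> (inv g \<otimes> h) $$ (k,l))"
      using h by (intro sum.cong) (auto simp: m_assoc[symmetric] inv_mult_group)
    also have "\<dots> = (\<Sum>g\<in>carrier G. \<sigma> g $$ (i,j) * (\<Sum>a<d. \<sigma> (inv g) $$ (k,a) * \<sigma> h $$ (a,l)))"
      using rep_entry[OF rep _ h ijkl(3) l] by simp
    also have "\<dots> = (\<Sum>a<d. (\<Sum>g\<in>carrier G. \<sigma> g $$ (i,j) * \<sigma> (inv g) $$ (k,a)) * \<sigma> h $$ (a,l))"
      by (simp add: sum_distrib_left sum_distrib_right mult.assoc) (rule sum.swap)
    also have "\<dots> = (M * \<sigma> h) $$ (i,l)"
      using i l sc[OF h] M by (simp add: scalar_prod_def atLeast0LessThan M_def)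
    finally show "(M * \<sigma> h) $$ (i, l) = (\<sigma> h * M) $$ (i, l)" by simp
  qed (use M sc[OF h] in auto)
  obtain c where Mc: "M = c \<cdot>\<^sub>m 1\<^sub>m d" using schur[OF irr M comm] by blast
  have "mat_trace M = (\<Sum>i<d. \<Sum>g\<in>carrier G. \<sigma> (inv g) $$ (k,i) * \<sigma> g $$ (i,j))"
    by (simp add: mat_trace_def M_def mult.commute)
  also have "\<dots> = (\<Sum>g\<in>carrier G. (\<sigma> (inv g) * \<sigma> g) $$ (k,j))"
    using ijkl by (subst sum.swap, intro sum.cong refl, subst mult_entry[OF sc sc], auto)
  also have "\<dots> = (\<Sum>g\<in>carrier G. (1\<^sub>m d) $$ (k,j))"
    by (intro sum.cong) (auto simp: rep_inv_mult[OF rep])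
  also have "\<dots> = of_nat (card (carrier G)) * (if k = j then 1 else 0)"
    using ijkl by simp
  finally have tr: "mat_trace M = of_nat (card (carrier G)) * (if k = j then 1 else 0)" .
  have "mat_trace M = c * of_nat d" using Mc by (simp add: mat_trace_def)
  with tr d have c: "c = of_nat (card (carrier G)) * (if k = j then 1 else 0) / of_nat d"
    by (simp add: field_simps)
  have "(\<Sum>g\<in>carrier G. \<sigma> g $$ (i,j) * \<sigma> (inv g) $$ (k,l)) = M $$ (i,l)"
    using ijkl by (simp add: M_def)
  also have "\<dots> = (if i = l then c else 0)" using Mc ijkl by simp
  finally show ?thesis using c by auto
qed


definition injm :: "complex mat \<Rightarrow> bool" where
  "injm P \<longleftrightarrow> (\<forall>v\<in>carrier_vec (dim_col P). P *\<^sub>v v = 0\<^sub>v (dim_row P) \<longrightarrow> v = 0\<^sub>v (dim_col P))"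

lemma inj_le:
  assumes P: "P \<in> carrier_mat n m" and inj: "injm P"
  shows "m \<le> n"
proof (rule ccontr)
  assume "\<not> m \<le> n" hence nm: "n < m" by simp
  define Q where "Q = mat m m (\<lambda>(i,j). if i < n then P $$ (i,j) else (0::complex))"
  have Q: "Q \<in> carrier_mat m m" by (simp add: Q_def)
  have QQ: "Q = mat\<^sub>r m m (\<lambda>i. if i = m - 1 then 0\<^sub>v m else row Q i)"
    using nm by (intro eq_matI) (auto simp: Q_def mat_of_rows_def)
  have "det Q = 0"
    by (subst QQ, rule det_row_0) (use nm Q in auto)
  then obtain v where v: "v \<in> carrier_vec m" "v \<noteq> 0\<^sub>v m" "Q *\<^sub>v v = 0\<^sub>v m"
    using det_0_iff_vec_prod_zero_field[OF Q] by blast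
  have "P *\<^sub>v v = 0\<^sub>v n"
  proof (rule eq_vecI)
    fix i assume "i < dim_vec (0\<^sub>v n :: complex vec)"
    then have i: "i < n" by simp
    have "(P *\<^sub>v v) $ i = (\<Sum>k<m. P $$ (i,k) * v $ k)" using mult_vec_entry[OF P v(1) i] .
    also have "\<dots> = (Q *\<^sub>v v) $ i" by (subst mult_vec_entry[OF Q v(1)]) (use i nm in \<open>auto simp: Q_def\<close>)
    also have "\<dots> = 0" using v(3) i nm by simp
    finally show "(P *\<^sub>v v) $ i = 0\<^sub>v n $ i" using i by simp
  qed (use P in simp)
  with inj P v show False unfolding injm_def by auto
qed

lemma inj_square_surj:
  assumes P: "P \<in> carrier_mat n n" and inj: "injm P" and w: "w \<in> carrier_vec n"
  shows "\<exists>v\<in>carrier_vec n. P *\<^sub>v v = w"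
proof -
  have "det P \<noteq> 0"
    using det_0_iff_vec_prod_zero_field[OF P] inj P unfolding injm_def by auto
  from det_non_zero_imp_unit[OF P this, of "()"]
  obtain B where B: "B \<in> carrier_mat n n" "P * B = 1\<^sub>m n"
    unfolding Units_def ring_mat_def by auto
  have "P *\<^sub>v (B *\<^sub>v w) = w" using B P w by (simp flip: assoc_mult_mat_vec)
  then show ?thesis using B w by (intro bexI[of _ "B *\<^sub>v w"]) auto
qed

definition subsp :: "nat \<Rightarrow> complex vec set \<Rightarrow> bool" where
  "subsp n W \<longleftrightarrow> W \<subseteq> carrier_vec n \<and> 0\<^sub>v n \<in> W \<and>
     (\<forall>v\<in>W. \<forall>w\<in>W. v + w \<in> W) \<and> (\<forall>c. \<forall>v\<in>W. c \<cdot>\<^sub>v v \<in> W)"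

lemma coord:
  assumes W: "subsp n W"
  shows "\<exists>m P. P \<in> carrier_mat n m \<and> injm P \<and> (\<forall>v\<in>carrier_vec m. P *\<^sub>v v \<in> W) \<and>
           (\<forall>w\<in>W. \<exists>v\<in>carrier_vec m. P *\<^sub>v v = w)"
proof -
  from W have Wc: "W \<subseteq> carrier_vec n" and W0: "0\<^sub>v n \<in> W"
    and Wadd: "\<And>v w. v \<in> W \<Longrightarrow> w \<in> W \<Longrightarrow> v + w \<in> W"
    and Wsm: "\<And>c v. v \<in> W \<Longrightarrow> c \<cdot>\<^sub>v v \<in> W" unfolding subsp_def by auto
  define S where "S = {m. \<exists>P. P \<in> carrier_mat n m \<and> injm P \<and> (\<forall>v\<in>carrier_vec m. P *\<^sub>v v \<in> W)}"
  have "0 \<in> S"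
  proof -
    have "v \<in> carrier_vec 0 \<Longrightarrow> 0\<^sub>m n 0 *\<^sub>v v = 0\<^sub>v n" for v :: "complex vec"
      by (intro eq_vecI) (auto simp: scalar_prod_def)
    moreover have "v \<in> carrier_vec 0 \<Longrightarrow> v = 0\<^sub>v 0" for v :: "complex vec"
      by (intro eq_vecI) auto
    ultimately show ?thesis unfolding S_def injm_def using W0
      by (intro CollectI exI[of _ "0\<^sub>m n 0"]) auto
  qed
  have Sb: "S \<subseteq> {..n}" unfolding S_def using inj_le by auto
  then have finS: "finite S" by (rule finite_subset) simp
  define m where "m = Max S"
  have "m \<in> S" unfolding m_def using finS \<open>0 \<in> S\<close> by (intro Max_in) auto
  then obtain P where P: "P \<in> carrier_mat n m" "injm P" "\<And>v. v \<in> carrier_vec m \<Longrightarrow> P *\<^sub>v v \<in> W"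
    unfolding S_def by auto
  have "\<forall>w\<in>W. \<exists>v\<in>carrier_vec m. P *\<^sub>v v = w"
  proof (rule ccontr)
    assume "\<not> ?thesis"
    then obtain w where w: "w \<in> W" and nw: "\<And>v. v \<in> carrier_vec m \<Longrightarrow> P *\<^sub>v v \<noteq> w" by auto
    have wc: "w \<in> carrier_vec n" using w Wc by auto
    define P' where "P' = mat n (Suc m) (\<lambda>(i,j). if j < m then P $$ (i,j) else w $ i)"
    have P': "P' \<in> carrier_mat n (Suc m)" by (simp add: P'_def)
    have split: "P' *\<^sub>v v = P *\<^sub>v vec m (\<lambda>i. v $ i) + (v $ m) \<cdot>\<^sub>v w"
      if v: "v \<in> carrier_vec (Suc m)" for v
    proof (rule eq_vecI)
      fix i assume "i < dim_vec (P *\<^sub>v vec m (\<lambda>i. v $ i) + v $ m \<cdot>\<^sub>v w)"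
      then have i: "i < n" using P wc by simp
      have "(P' *\<^sub>v v) $ i = (\<Sum>k<Suc m. P' $$ (i,k) * v $ k)" using mult_vec_entry[OF P' v i] .
      also have "\<dots> = (\<Sum>k<m. P $$ (i,k) * v $ k) + w $ i * v $ m"
        using i by (simp add: P'_def)
      also have "(\<Sum>k<m. P $$ (i,k) * v $ k) = (P *\<^sub>v vec m (\<lambda>i. v $ i)) $ i"
        using mult_vec_entry[OF P(1) _ i, of "vec m (\<lambda>i. v $ i)"] by simp
      finally show "(P' *\<^sub>v v) $ i = (P *\<^sub>v vec m (\<lambda>i. v $ i) + v $ m \<cdot>\<^sub>v w) $ i"
        using i wc P by (simp add: mult.commute)
    qed (use P P' wc in simp)
    have "Suc m \<in> S" unfolding S_def
    proof (intro CollectI exI conjI ballI)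
      show "P' \<in> carrier_mat n (Suc m)" by (rule P')
      fix v :: "complex vec" assume v: "v \<in> carrier_vec (Suc m)"
      show "P' *\<^sub>v v \<in> W" unfolding split[OF v]
        by (intro Wadd Wsm P w) auto
    next
      show "injm P'" unfolding injm_def
      proof (intro ballI impI)
        fix v :: "complex vec" assume v: "v \<in> carrier_vec (dim_col P')" and z: "P' *\<^sub>v v = 0\<^sub>v (dim_row P')"
        then have v: "v \<in> carrier_vec (Suc m)" and z: "P' *\<^sub>v v = 0\<^sub>v n" using P' by auto
        define u where "u = vec m (\<lambda>i. v $ i)"
        have u: "u \<in> carrier_vec m" by (simp add: u_def)
        have eq: "P *\<^sub>v u + (v $ m) \<cdot>\<^sub>v w = 0\<^sub>v n" using split[OF v] z by (simp add: u_def)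
        have cm: "v $ m = 0"
        proof (rule ccontr)
          assume c: "v $ m \<noteq> 0"
          have "P *\<^sub>v ((- 1 / v $ m) \<cdot>\<^sub>v u) = (- 1 / v $ m) \<cdot>\<^sub>v (P *\<^sub>v u)"
            using P u by (simp add: mult_mat_vec)
          also have "P *\<^sub>v u = - ((v $ m) \<cdot>\<^sub>v w)"
          proof (rule eq_vecI)
            fix i assume "i < dim_vec (- ((v $ m) \<cdot>\<^sub>v w))"
            then have i: "i < n" using wc by simp
            from arg_cong[OF eq, of "\<lambda>x. x $ i"] have "(P *\<^sub>v u) $ i + v $ m * w $ i = 0"
              using i P wc u by simp
            then show "(P *\<^sub>v u) $ i = (- ((v $ m) \<cdot>\<^sub>v w)) $ i"
              using i wc by (simp add: eq_neg_iff_add_eq_0)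
          qed (use P wc in simp)
          also have "(- 1 / v $ m) \<cdot>\<^sub>v (- ((v $ m) \<cdot>\<^sub>v w)) = w"
            using c wc by (intro eq_vecI) auto
          finally show False using nw[of "(- 1 / v $ m) \<cdot>\<^sub>v u"] u by simp
        qed
        moreover have "0 \<cdot>\<^sub>v w = 0\<^sub>v n" using wc by (intro eq_vecI) auto
        ultimately have "P *\<^sub>v u = 0\<^sub>v n" using eq P u by simp
        then have "u = 0\<^sub>v m" using P u unfolding injm_def by auto
        then have "\<And>i. i < m \<Longrightarrow> v $ i = 0"
          by (metis u_def index_vec index_zero_vec(1))
        then show "v = 0\<^sub>v (dim_col P')" using v cm P'
          by (intro eq_vecI) (auto simp: less_Suc_eq)
      qed
    qed
    then have "Suc m \<le> m" unfolding m_def using finS by (simp add: Max_ge)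
    then show False by simp
  qed
  with P show ?thesis by blast
qed


lemma inj_vec_cancel:
  assumes Q: "Q \<in> carrier_mat d e" and inj: "injm Q" and x: "x \<in> carrier_vec e" and y: "y \<in> carrier_vec e"
    and eq: "Q *\<^sub>v x = Q *\<^sub>v y"
  shows "x = y"
proof -
  have "Q *\<^sub>v (x - y) = Q *\<^sub>v x - Q *\<^sub>v y" using Q x y by (simp add: mult_minus_distrib_mat_vec)
  also have "\<dots> = 0\<^sub>v d" using eq Q y by simp
  finally have "x - y = 0\<^sub>v e" using inj Q x y unfolding injm_def by auto
  then have "\<And>i. i < e \<Longrightarrow> x $ i - y $ i = 0"
    using x y by (metis carrier_vecD index_minus_vec(1) index_zero_vec(1))
  then show ?thesis using x y by (intro eq_vecI) auto
qed

lemma inj_cancel: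
  assumes Q: "Q \<in> carrier_mat d e" and inj: "injm Q" and Xm: "Xm \<in> carrier_mat e k" and Ym: "Ym \<in> carrier_mat e k"
    and eq: "Q * Xm = Q * Ym"
  shows "Xm = Ym"
proof (rule mat_col_eqI)
  fix j assume "j < dim_col Ym" then have j: "j < k" using Ym by simp
  have "Q *\<^sub>v col Xm j = Q *\<^sub>v col Ym j"
    using eq col_mult2[OF Q Xm j] col_mult2[OF Q Ym j] by simp
  then show "col Xm j = col Ym j" using inj_vec_cancel[OF Q inj] Xm Ym j by auto
qed (use Xm Ym in auto)

lemma factor:
  assumes Q: "Q \<in> carrier_mat d e" and M: "M \<in> carrier_mat d k"
    and ex: "\<And>j. j < k \<Longrightarrow> \<exists>v\<in>carrier_vec e. Q *\<^sub>v v = col M j"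
  shows "\<exists>N\<in>carrier_mat e k. Q * N = M"
proof -
  define f where "f j = (SOME v. v \<in> carrier_vec e \<and> Q *\<^sub>v v = col M j)" for j
  have f: "f j \<in> carrier_vec e \<and> Q *\<^sub>v f j = col M j" if "j < k" for j
    using someI_ex[OF ex[OF that, unfolded Bex_def]] unfolding f_def .
  define N where "N = mat e k (\<lambda>(i,j). f j $ i)"
  have N: "N \<in> carrier_mat e k" by (simp add: N_def)
  have cN: "col N j = f j" if "j < k" for j
    using f[OF that] that by (intro eq_vecI) (auto simp: N_def)
  have "Q * N = M"
    by (rule mat_col_eqI) (use Q M N cN f col_mult2[OF Q N] in auto)
  with N show ?thesis by blast
qed

lemma injm_one: "injm (1\<^sub>m n)" by (simp add: injm_def)

lemma injm_mult:
  assumes P: "P \<in> carrier_mat n d" and Q: "Q \<in> carrier_mat d e" and "injm P" "injm Q"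
  shows "injm (P * Q)"
  unfolding injm_def
proof (intro ballI impI)
  fix v assume v: "v \<in> carrier_vec (dim_col (P * Q))" and z: "P * Q *\<^sub>v v = 0\<^sub>v (dim_row (P * Q))"
  have v': "v \<in> carrier_vec e" using v Q by simp
  have "P *\<^sub>v (Q *\<^sub>v v) = 0\<^sub>v n" using z P Q v' by simp
  then have "Q *\<^sub>v v = 0\<^sub>v d" using assms(3) P Q v' unfolding injm_def by auto
  then have "v = 0\<^sub>v e" using assms(4) Q v' unfolding injm_def by auto
  then show "v = 0\<^sub>v (dim_col (P * Q))" using Q by simp
qed

lemma (in group) sub_irr:
  assumes rep: "is_rep G n A" and n: "n > 0"
  shows "\<exists>d \<sigma> P. irreducible_rep G d \<sigma> \<and> P \<in> carrier_mat n d \<and> injm P \<and>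
           (\<forall>g\<in>carrier G. A g * P = P * \<sigma> g)"
proof -
  define T where "T = {d. d > 0 \<and> (\<exists>\<sigma> P. is_rep G d \<sigma> \<and> P \<in> carrier_mat n d \<and> injm P \<and>
           (\<forall>g\<in>carrier G. A g * P = P * \<sigma> g))}"
  have "n \<in> T" unfolding T_def using n rep injm_one
    by (intro CollectI conjI exI[of _ A] exI[of _ "1\<^sub>m n"]) (auto simp: is_rep_def)
  define d where "d = (LEAST d. d \<in> T)"
  have "d \<in> T" unfolding d_def by (rule LeastI) fact
  then obtain \<sigma> P where d0: "d > 0" and srep: "is_rep G d \<sigma>" and P: "P \<in> carrier_mat n d"
    and Pi: "injm P" and Pint: "\<forall>g\<in>carrier G. A g * P = P * \<sigma> g"
    unfolding T_def by auto
  have sc: "\<And>g. g \<in> carrier G \<Longrightarrow> \<sigma> g \<in> carrier_mat d d" using srep by (simp add: is_rep_def)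
  have Ac: "\<And>g. g \<in> carrier G \<Longrightarrow> A g \<in> carrier_mat n n" using rep by (simp add: is_rep_def)
  have "irreducible_rep G d \<sigma>"
    unfolding irreducible_rep_def
  proof (intro conjI d0 srep allI impI)
    fix Xm assume Xm: "invariant_subspace G d \<sigma> Xm"
    show "Xm = {0\<^sub>v d} \<or> Xm = carrier_vec d"
    proof (rule ccontr)
      assume nt: "\<not> ?thesis"
      have "subsp d Xm" using Xm unfolding invariant_subspace_def subsp_def by auto
      from coord[OF this] obtain e Q where Q: "Q \<in> carrier_mat d e" and Qi: "injm Q"
        and QX: "\<And>v. v \<in> carrier_vec e \<Longrightarrow> Q *\<^sub>v v \<in> Xm" and XQ: "\<And>w. w \<in> Xm \<Longrightarrow> \<exists>v\<in>carrier_vec e. Q *\<^sub>v v = w"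
        by blast
      have Xc: "Xm \<subseteq> carrier_vec d" and X0: "0\<^sub>v d \<in> Xm"
        and Xs: "\<And>g x. g \<in> carrier G \<Longrightarrow> x \<in> Xm \<Longrightarrow> \<sigma> g *\<^sub>v x \<in> Xm"
        using Xm unfolding invariant_subspace_def by auto
      have ed: "e \<le> d" using inj_le[OF Q Qi] .
      have "e \<noteq> d"
      proof
        assume "e = d"
        then have "carrier_vec d \<subseteq> Xm" using inj_square_surj[of Q d] Q Qi QX by fastforce
        then show False using nt Xc by auto
      qed
      with ed have ed: "e < d" by simp
      have "e > 0"
      proof (rule ccontr)
        assume "\<not> e > 0" then have e0: "e = 0" by simp
        have "Xm \<subseteq> {0\<^sub>v d}"
        proof
          fix w assume "w \<in> Xm"
          then obtain v where v: "v \<in> carrier_vec e" "Q *\<^sub>v v = w" using XQ by blast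
          then show "w \<in> {0\<^sub>v d}" using Q e0 by (auto intro!: eq_vecI simp: scalar_prod_def)
        qed
        then show False using nt X0 by auto
      qed
      have colX: "\<And>g j. g \<in> carrier G \<Longrightarrow> j < e \<Longrightarrow> \<exists>v\<in>carrier_vec e. Q *\<^sub>v v = col (\<sigma> g * Q) j"
      proof -
        fix g j assume g: "g \<in> carrier G" and j: "j < e"
        have "col Q j = Q *\<^sub>v unit_vec e j"
          using Q j by (intro eq_vecI) (auto simp: scalar_prod_def atLeast0LessThan if_distrib cong: if_cong)
        then have "col Q j \<in> Xm" using QX[of "unit_vec e j"] by simp
        then have "col (\<sigma> g * Q) j \<in> Xm" using col_mult2[OF sc[OF g] Q j] Xs g by simp
        then show "\<exists>v\<in>carrier_vec e. Q *\<^sub>v v = col (\<sigma> g * Q) j" using XQ by blast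
      qed
      define \<tau> where "\<tau> g = (SOME N. N \<in> carrier_mat e e \<and> Q * N = \<sigma> g * Q)" for g
      have \<tau>: "\<tau> g \<in> carrier_mat e e \<and> Q * \<tau> g = \<sigma> g * Q" if g: "g \<in> carrier G" for g
      proof -
        have "\<exists>N. N \<in> carrier_mat e e \<and> Q * N = \<sigma> g * Q"
          using factor[OF Q _ colX[OF g], of e] sc[OF g] Q by auto
        then show ?thesis unfolding \<tau>_def by (rule someI_ex)
      qed
      have trep: "is_rep G e \<tau>"
        unfolding is_rep_def
      proof (intro conjI ballI)
        show "\<tau> g \<in> carrier_mat e e" if "g \<in> carrier G" for g using \<tau>[OF that] by simp
        have "Q * \<tau> \<one>\<^bsub>G\<^esub> = Q * 1\<^sub>m e"
          using \<tau>[of "\<one>\<^bsub>G\<^esub>"] srep Q rep by (auto simp: is_rep_def)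
        then show "\<tau> \<one>\<^bsub>G\<^esub> = 1\<^sub>m e"
          using inj_cancel[OF Q Qi] \<tau>[of "\<one>\<^bsub>G\<^esub>"] rep by (auto simp: is_rep_def)
      next
        fix x y assume x: "x \<in> carrier G" and y: "y \<in> carrier G"
        have xy: "x \<otimes>\<^bsub>G\<^esub> y \<in> carrier G" using x y by simp
        have "Q * \<tau> (x \<otimes>\<^bsub>G\<^esub> y) = \<sigma> (x \<otimes>\<^bsub>G\<^esub> y) * Q" using \<tau>[OF xy] by simp
        also have "\<dots> = \<sigma> x * (\<sigma> y * Q)" using srep x y by (simp add: is_rep_def assoc_mult_mat[OF sc[OF x] sc[OF y] Q])
        also have "\<dots> = \<sigma> x * (Q * \<tau> y)" using \<tau>[OF y] by simp
        also have "\<dots> = (\<sigma> x * Q) * \<tau> y"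
          using assoc_mult_mat[OF sc[OF x] Q, of "\<tau> y" e] \<tau>[OF y] by simp
        also have "\<dots> = (Q * \<tau> x) * \<tau> y" using \<tau>[OF x] by simp
        also have "\<dots> = Q * (\<tau> x * \<tau> y)"
          using assoc_mult_mat[OF Q, of "\<tau> x" e "\<tau> y" e] \<tau>[OF x] \<tau>[OF y] by simp
        finally show "\<tau> (x \<otimes>\<^bsub>G\<^esub> y) = \<tau> x * \<tau> y"
          using inj_cancel[OF Q Qi] \<tau>[OF xy] \<tau>[OF x] \<tau>[OF y] by auto
      qed
      have "e \<in> T" unfolding T_def
      proof (intro CollectI conjI exI ballI)
        show "0 < e" by fact
        show "is_rep G e \<tau>" by fact
        show "P * Q \<in> carrier_mat n e" using P Q by simp
        show "injm (P * Q)" using injm_mult[OF P Q Pi Qi] .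
        fix g assume g: "g \<in> carrier G"
        have "A g * (P * Q) = (A g * P) * Q" using Ac[OF g] P Q by simp
        also have "\<dots> = P * (\<sigma> g * Q)" using Pint g P sc[OF g] Q by simp
        also have "\<dots> = (P * Q) * \<tau> g" using \<tau>[OF g] P Q assoc_mult_mat[OF P Q, of "\<tau> g" e] by simp
        finally show "A g * (P * Q) = P * Q * \<tau> g" .
      qed
      then have "d \<le> e" unfolding d_def by (rule Least_le)
      with ed show False by simp
    qed
  qed
  with P Pi Pint show ?thesis by blast
qed


lemma mult_index2[simp]: "i < dim_row A \<Longrightarrow> j < dim_col B \<Longrightarrow> dim_col A = dim_row B \<Longrightarrow>
  (A * B) $$ (i,j) = (\<Sum>k<dim_row B. A $$ (i,k) * B $$ (k,j))"
  by (simp add: scalar_prod_def atLeast0LessThan)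

declare index_mult_mat(1)[simp del]

definition Four :: "('a,'b) monoid_scheme \<Rightarrow> ('a \<Rightarrow> complex mat) \<Rightarrow> nat \<Rightarrow> ('a \<Rightarrow> complex) \<Rightarrow> complex mat" where
  "Four G R m f = mat m m (\<lambda>(a,b). \<Sum>g\<in>carrier G. f g * R g $$ (a,b))"

lemma Four_carrier[simp]: "Four G R m f \<in> carrier_mat m m"
  by (simp add: Four_def)

lemma Four_dim[simp]: "dim_row (Four G R m f) = m" "dim_col (Four G R m f) = m"
  by (simp_all add: Four_def)

lemma Four_index: "a < m \<Longrightarrow> b < m \<Longrightarrow> Four G R m f $$ (a,b) = (\<Sum>g\<in>carrier G. f g * R g $$ (a,b))"
  by (simp add: Four_def)

lemma Four_cong: "(\<And>x. x \<in> carrier G \<Longrightarrow> f x = f' x) \<Longrightarrow> Four G R m f = Four G R m f'"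
  unfolding Four_def by (intro eq_matI) auto

lemma Four_smult: "Four G R m (\<lambda>x. c * f x) = c \<cdot>\<^sub>m Four G R m f"
  unfolding Four_def by (intro eq_matI) (auto simp: sum_distrib_left mult.assoc)

context group begin

lemma cancel_l1: "y \<in> carrier G \<Longrightarrow> x \<in> carrier G \<Longrightarrow> y \<otimes> (inv y \<otimes> x) = x"
  by (metis m_assoc r_inv l_one inv_closed)
lemma cancel_l2: "y \<in> carrier G \<Longrightarrow> x \<in> carrier G \<Longrightarrow> inv y \<otimes> (y \<otimes> x) = x"
  by (metis m_assoc l_inv l_one inv_closed)
lemma cancel_r1: "y \<in> carrier G \<Longrightarrow> x \<in> carrier G \<Longrightarrow> x \<otimes> inv y \<otimes> y = x"
  by (metis m_assoc l_inv r_one inv_closed)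
lemma cancel_r2: "y \<in> carrier G \<Longrightarrow> x \<in> carrier G \<Longrightarrow> x \<otimes> y \<otimes> inv y = x"
  by (metis m_assoc r_inv r_one inv_closed)

lemma Four_mult:
  assumes rep: "is_rep G m R"
  shows "Four G R m f * Four G R m f' = Four G R m (\<lambda>x. \<Sum>y\<in>carrier G. f y * f' (inv y \<otimes> x))"
proof (rule eq_matI)
  fix a b assume "a < dim_row (Four G R m (\<lambda>x. \<Sum>y\<in>carrier G. f y * f' (inv y \<otimes> x)))"
    "b < dim_col (Four G R m (\<lambda>x. \<Sum>y\<in>carrier G. f y * f' (inv y \<otimes> x)))"
  then have a: "a < m" and b: "b < m" by auto
  have Rc: "\<And>g. g \<in> carrier G \<Longrightarrow> R g \<in> carrier_mat m m" using rep by (simp add: is_rep_def)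
  have "(Four G R m f * Four G R m f') $$ (a,b) =
      (\<Sum>c<m. (\<Sum>y\<in>carrier G. f y * R y $$ (a,c)) * (\<Sum>z\<in>carrier G. f' z * R z $$ (c,b)))"
    using a b by (simp add: Four_index)
  also have "\<dots> = (\<Sum>c<m. \<Sum>y\<in>carrier G. \<Sum>z\<in>carrier G. f y * R y $$ (a,c) * (f' z * R z $$ (c,b)))"
    by (simp add: sum_product)
  also have "\<dots> = (\<Sum>y\<in>carrier G. \<Sum>z\<in>carrier G. \<Sum>c<m. f y * R y $$ (a,c) * (f' z * R z $$ (c,b)))"
    by (rule sum.swap[THEN trans], rule sum.cong[OF refl], rule sum.swap)
  also have "\<dots> = (\<Sum>y\<in>carrier G. \<Sum>z\<in>carrier G. f y * f' z * (\<Sum>c<m. R y $$ (a,c) * R z $$ (c,b)))"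
    by (simp add: sum_distrib_left mult_ac)
  also have "\<dots> = (\<Sum>y\<in>carrier G. \<Sum>z\<in>carrier G. f y * f' z * R (y \<otimes> z) $$ (a,b))"
    using rep_entry[OF rep _ _ a b] by simp
  also have "\<dots> = (\<Sum>y\<in>carrier G. \<Sum>x\<in>carrier G. f y * f' (inv y \<otimes> x) * R (y \<otimes> (inv y \<otimes> x)) $$ (a,b))"
  proof (rule sum.cong[OF refl])
    fix y assume y: "y \<in> carrier G"
    show "(\<Sum>z\<in>carrier G. f y * f' z * R (y \<otimes> z) $$ (a,b)) = (\<Sum>x\<in>carrier G. f y * f' (inv y \<otimes> x) * R (y \<otimes> (inv y \<otimes> x)) $$ (a,b))"
      using sum_lmult[OF inv_closed[OF y], of "\<lambda>z. f y * f' z * R (y \<otimes> z) $$ (a,b)"] by simp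
  qed
  also have "\<dots> = (\<Sum>y\<in>carrier G. \<Sum>x\<in>carrier G. f y * f' (inv y \<otimes> x) * R x $$ (a,b))"
    by (intro sum.cong refl) (simp add: cancel_l1)
  also have "\<dots> = (\<Sum>x\<in>carrier G. (\<Sum>y\<in>carrier G. f y * f' (inv y \<otimes> x)) * R x $$ (a,b))"
    by (subst sum.swap) (simp add: sum_distrib_right)
  also have "\<dots> = Four G R m (\<lambda>x. \<Sum>y\<in>carrier G. f y * f' (inv y \<otimes> x)) $$ (a,b)"
    using a b by (simp add: Four_index)
  finally show "(Four G R m f * Four G R m f') $$ (a,b) = Four G R m (\<lambda>x. \<Sum>y\<in>carrier G. f y * f' (inv y \<otimes> x)) $$ (a,b)" .
qed auto

lemma h1: "(\<Sum>c<m. (\<Sum>y\<in>S. (f y :: complex) * X1 y c) * Yc c) = (\<Sum>y\<in>S. f y * (\<Sum>c<m. X1 y c * Yc c))"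
  by (simp only: sum_distrib_left sum_distrib_right mult.assoc, rule sum.swap)

lemma h2: "(\<Sum>c<m. Xc c * (\<Sum>y\<in>S. (f y :: complex) * Y1 y c)) = (\<Sum>y\<in>S. f y * (\<Sum>c<m. Xc c * Y1 y c))"
  by (simp only: sum_distrib_left, subst sum.swap, rule sum.cong[OF refl], rule sum.cong[OF refl], simp)

lemma Four_lmul:
  assumes rep: "is_rep G m R" and h: "h \<in> carrier G"
  shows "R h * Four G R m f = Four G R m (\<lambda>x. f (inv h \<otimes> x))"
proof (rule eq_matI)
  have Rc: "\<And>g. g \<in> carrier G \<Longrightarrow> R g \<in> carrier_mat m m" using rep by (simp add: is_rep_def)
  fix a b assume "a < dim_row (Four G R m (\<lambda>x. f (inv h \<otimes> x)))" "b < dim_col (Four G R m (\<lambda>x. f (inv h \<otimes> x)))"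
  then have a: "a < m" and b: "b < m" by auto
  have "(R h * Four G R m f) $$ (a,b) = (\<Sum>c<m. R h $$ (a,c) * (\<Sum>y\<in>carrier G. f y * R y $$ (c,b)))"
    using a b by (simp add: mult_entry[OF Rc[OF h] Four_carrier] Four_index)
  also have "\<dots> = (\<Sum>y\<in>carrier G. f y * R (h \<otimes> y) $$ (a,b))"
    unfolding h2 using rep_entry[OF rep h _ a b] by simp
  also have "\<dots> = (\<Sum>x\<in>carrier G. f (inv h \<otimes> x) * R (h \<otimes> (inv h \<otimes> x)) $$ (a,b))"
    using sum_lmult[OF inv_closed[OF h], of "\<lambda>y. f y * R (h \<otimes> y) $$ (a,b)"] by simp
  also have "\<dots> = Four G R m (\<lambda>x. f (inv h \<otimes> x)) $$ (a,b)"
    using a b h by (simp add: Four_index cancel_l1)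
  finally show "(R h * Four G R m f) $$ (a,b) = Four G R m (\<lambda>x. f (inv h \<otimes> x)) $$ (a,b)" .
qed (use rep h in \<open>auto simp: is_rep_def\<close>)

lemma Four_rmul:
  assumes rep: "is_rep G m R" and h: "h \<in> carrier G"
  shows "Four G R m f * R h = Four G R m (\<lambda>x. f (x \<otimes> inv h))"
proof (rule eq_matI)
  have Rc: "\<And>g. g \<in> carrier G \<Longrightarrow> R g \<in> carrier_mat m m" using rep by (simp add: is_rep_def)
  fix a b assume "a < dim_row (Four G R m (\<lambda>x. f (x \<otimes> inv h)))" "b < dim_col (Four G R m (\<lambda>x. f (x \<otimes> inv h)))"
  then have a: "a < m" and b: "b < m" by auto
  have "(Four G R m f * R h) $$ (a,b) = (\<Sum>c<m. (\<Sum>y\<in>carrier G. f y * R y $$ (a,c)) * R h $$ (c,b))"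
    using a b by (simp add: mult_entry[OF Four_carrier Rc[OF h]] Four_index)
  also have "\<dots> = (\<Sum>y\<in>carrier G. f y * R (y \<otimes> h) $$ (a,b))"
    unfolding h1 using rep_entry[OF rep _ h a b] by simp
  also have "\<dots> = (\<Sum>x\<in>carrier G. f (x \<otimes> inv h) * R (x \<otimes> inv h \<otimes> h) $$ (a,b))"
    using sum_rmult[OF inv_closed[OF h], of "\<lambda>y. f y * R (y \<otimes> h) $$ (a,b)"] by simp
  also have "\<dots> = Four G R m (\<lambda>x. f (x \<otimes> inv h)) $$ (a,b)"
    using a b h by (simp add: Four_index cancel_r1)
  finally show "(Four G R m f * R h) $$ (a,b) = Four G R m (\<lambda>x. f (x \<otimes> inv h)) $$ (a,b)" .
qed (use rep h in \<open>auto simp: is_rep_def\<close>)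

lemma Four_comm:
  assumes rep: "is_rep G m R" and M: "M \<in> carrier_mat m m"
    and comm: "\<And>g. g \<in> carrier G \<Longrightarrow> M * R g = R g * M"
  shows "M * Four G R m f = Four G R m f * M"
proof (rule eq_matI)
  have Rc: "\<And>g. g \<in> carrier G \<Longrightarrow> R g \<in> carrier_mat m m" using rep by (simp add: is_rep_def)
  fix a b assume "a < dim_row (Four G R m f * M)" "b < dim_col (Four G R m f * M)"
  then have a: "a < m" and b: "b < m" using M by auto
  have "(M * Four G R m f) $$ (a,b) = (\<Sum>c<m. M $$ (a,c) * (\<Sum>y\<in>carrier G. f y * R y $$ (c,b)))"
    using a b by (simp add: mult_entry[OF M Four_carrier] Four_index)
  also have "\<dots> = (\<Sum>y\<in>carrier G. f y * (M * R y) $$ (a,b))"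
    unfolding h2 using a b by (intro sum.cong refl) (simp add: mult_entry[OF M Rc])
  also have "\<dots> = (\<Sum>y\<in>carrier G. f y * (R y * M) $$ (a,b))"
    using comm by simp
  also have "\<dots> = (\<Sum>c<m. (\<Sum>y\<in>carrier G. f y * R y $$ (a,c)) * M $$ (c,b))"
    unfolding h1 using a b by (intro sum.cong refl) (simp add: mult_entry[OF Rc M])
  also have "\<dots> = (Four G R m f * M) $$ (a,b)"
    using a b by (simp add: mult_entry[OF Four_carrier M] Four_index)
  finally show "(M * Four G R m f) $$ (a,b) = (Four G R m f * M) $$ (a,b)" .
qed (use M in auto)

lemma Four_intw:
  assumes rep: "is_rep G m R" and rep2: "is_rep G k S" and P: "P \<in> carrier_mat m k"
    and intw: "\<And>g. g \<in> carrier G \<Longrightarrow> R g * P = P * S g"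
  shows "Four G R m f * P = P * Four G S k f"
proof (rule eq_matI)
  have Rc: "\<And>g. g \<in> carrier G \<Longrightarrow> R g \<in> carrier_mat m m" using rep by (simp add: is_rep_def)
  have Sc: "\<And>g. g \<in> carrier G \<Longrightarrow> S g \<in> carrier_mat k k" using rep2 by (simp add: is_rep_def)
  fix a b assume "a < dim_row (P * Four G S k f)" "b < dim_col (P * Four G S k f)"
  then have a: "a < m" and b: "b < k" using P by auto
  have "(Four G R m f * P) $$ (a,b) = (\<Sum>c<m. (\<Sum>y\<in>carrier G. f y * R y $$ (a,c)) * P $$ (c,b))"
    using a b by (simp add: mult_entry[OF Four_carrier P] Four_index)
  also have "\<dots> = (\<Sum>y\<in>carrier G. f y * (R y * P) $$ (a,b))"
    unfolding h1 using a b by (intro sum.cong refl) (simp add: mult_entry[OF Rc P])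
  also have "\<dots> = (\<Sum>y\<in>carrier G. f y * (P * S y) $$ (a,b))"
    using intw by simp
  also have "\<dots> = (\<Sum>c<k. P $$ (a,c) * (\<Sum>y\<in>carrier G. f y * S y $$ (c,b)))"
    unfolding h2 using a b by (intro sum.cong refl) (simp add: mult_entry[OF P Sc])
  also have "\<dots> = (P * Four G S k f) $$ (a,b)"
    using a b by (simp add: mult_entry[OF P Four_carrier] Four_index)
  finally show "(Four G R m f * P) $$ (a,b) = (P * Four G S k f) $$ (a,b)" .
qed (use P in auto)

end

lemma Four_zero: "Four G R m (\<lambda>x. 0) = 0\<^sub>m m m"
  by (intro eq_matI) (auto simp: Four_index)

lemma (in group) conv_orth:
  assumes fin: "finite (carrier G)" and irr: "irreducible_rep G d \<sigma>"
    and ijkl: "i < d" "j < d" "k < d" "l < d" and x: "x \<in> carrier G"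
  shows "(\<Sum>y\<in>carrier G. \<sigma> (inv y) $$ (j,i) * \<sigma> (inv (inv y \<otimes> x)) $$ (l,k)) =
         (if j = k then of_nat (card (carrier G)) / of_nat d * \<sigma> (inv x) $$ (l,i) else 0)"
proof -
  have rep: "is_rep G d \<sigma>" using irr by (simp add: irreducible_rep_def)
  have "(\<Sum>y\<in>carrier G. \<sigma> (inv y) $$ (j,i) * \<sigma> (inv (inv y \<otimes> x)) $$ (l,k)) =
        (\<Sum>y\<in>carrier G. \<sigma> (inv y) $$ (j,i) * (\<Sum>p<d. \<sigma> (inv x) $$ (l,p) * \<sigma> y $$ (p,k)))"
    using x ijkl by (intro sum.cong refl) (simp add: inv_mult_group rep_entry[OF rep])
  also have "\<dots> = (\<Sum>p<d. \<sigma> (inv x) $$ (l,p) * (\<Sum>y\<in>carrier G. \<sigma> y $$ (p,k) * \<sigma> (inv y) $$ (j,i)))"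
    by (simp add: sum_distrib_left mult_ac, rule sum.swap)
  also have "\<dots> = (\<Sum>p<d. \<sigma> (inv x) $$ (l,p) * (if p = i \<and> k = j then of_nat (card (carrier G)) / of_nat d else 0))"
    using ijkl by (intro sum.cong refl) (simp add: schur_orth[OF fin irr])
  also have "\<dots> = (if j = k then of_nat (card (carrier G)) / of_nat d * \<sigma> (inv x) $$ (l,i) else 0)"
    using ijkl by (auto simp: if_distrib[of "\<lambda>t. _ * t"] cong: if_cong)
  finally show ?thesis .
qed

lemma trace_Four_sum:
  assumes M: "M \<in> carrier_mat m m" and fin: "finite I"
  shows "mat_trace (M * Four G R m (\<lambda>x. \<Sum>i\<in>I. f i x)) = (\<Sum>i\<in>I. mat_trace (M * Four G R m (f i)))"
proof -
  have "mat_trace (M * Four G R m (\<lambda>x. \<Sum>i\<in>I. f i x)) =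
     (\<Sum>a<m. \<Sum>c<m. M $$ (a,c) * (\<Sum>g\<in>carrier G. (\<Sum>i\<in>I. f i g) * R g $$ (c,a)))"
    using M by (simp add: mat_trace_def mult_entry[OF M Four_carrier] Four_index)
  also have "\<dots> = (\<Sum>a<m. \<Sum>c<m. \<Sum>i\<in>I. M $$ (a,c) * (\<Sum>g\<in>carrier G. f i g * R g $$ (c,a)))"
    by (simp add: sum_distrib_left sum_distrib_right mult_ac sum.swap[of _ I])
  also have "\<dots> = (\<Sum>i\<in>I. \<Sum>a<m. \<Sum>c<m. M $$ (a,c) * (\<Sum>g\<in>carrier G. f i g * R g $$ (c,a)))"
    by (subst sum.swap, rule sum.cong[OF refl], rule sum.swap)
  also have "\<dots> = (\<Sum>i\<in>I. mat_trace (M * Four G R m (f i)))"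
    using M by (simp add: mat_trace_def mult_entry[OF M Four_carrier] Four_index)
  finally show ?thesis .
qed

lemma trace_smult: "M \<in> carrier_mat m m \<Longrightarrow> mat_trace (c \<cdot>\<^sub>m M) = c * mat_trace M"
  by (auto simp: mat_trace_def sum_distrib_left intro!: sum.cong)


lemma assoc_dims[simp]: "dim_col A = dim_row B \<Longrightarrow> dim_col B = dim_row C \<Longrightarrow> (A * B) * C = A * (B * (C :: complex mat))"
  by (rule assoc_mult_mat[of A "dim_row A" "dim_col A" B "dim_col B" C "dim_col C"]) (auto intro: carrier_matI)

lemma injmD: "injm P \<Longrightarrow> P \<in> carrier_mat n d \<Longrightarrow> v \<in> carrier_vec d \<Longrightarrow> P *\<^sub>v v = 0\<^sub>v n \<Longrightarrow> v = 0\<^sub>v d"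
  by (simp add: injm_def)

locale PR = G: group G + H: group H
  for G :: "('a,'b) monoid_scheme" and H :: "('c,'e) monoid_scheme" +
  fixes n :: nat and \<rho> :: "'a \<times> 'c \<Rightarrow> complex mat" and d :: nat and \<sigma> :: "'a \<Rightarrow> complex mat" and P :: "complex mat"
  assumes finG: "finite (carrier G)" and finH: "finite (carrier H)"
    and irr: "irreducible_rep (G \<times>\<times> H) n \<rho>"
    and sirr: "irreducible_rep G d \<sigma>"
    and P: "P \<in> carrier_mat n d" and Pinj: "injm P"
    and Pint: "\<And>g. g \<in> carrier G \<Longrightarrow> \<rho> (g, \<one>\<^bsub>H\<^esub>) * P = P * \<sigma> g"
begin

definition A where "A g = \<rho> (g, \<one>\<^bsub>H\<^esub>)"
definition B where "B h = \<rho> (\<one>\<^bsub>G\<^esub>, h)"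
definition c0 :: complex where "c0 = of_nat d / of_nat (card (carrier G))"
definition E where "E i j = Four G A n (\<lambda>g. c0 * \<sigma> (inv\<^bsub>G\<^esub> g) $$ (j,i))"
definition chi where "chi g = (\<Sum>i<d. \<sigma> g $$ (i,i))"
definition Es where "Es = Four G A n (\<lambda>g. c0 * chi (inv\<^bsub>G\<^esub> g))"

lemma rrep: "is_rep (G \<times>\<times> H) n \<rho>" using irr by (simp add: irreducible_rep_def)
lemma srep: "is_rep G d \<sigma>" using sirr by (simp add: irreducible_rep_def)
lemma dpos: "d > 0" using sirr by (simp add: irreducible_rep_def)
lemma npos: "n > 0" using irr by (simp add: irreducible_rep_def)
lemma Gne: "card (carrier G) > 0" using finG G.one_closed card_gt_0_iff by blast

lemma rc: "g \<in> carrier G \<Longrightarrow> h \<in> carrier H \<Longrightarrow> \<rho> (g,h) \<in> carrier_mat n n"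
  using rrep by (simp add: is_rep_def)
lemma Ac[simp]: "g \<in> carrier G \<Longrightarrow> A g \<in> carrier_mat n n" unfolding A_def by (simp add: rc)
lemma Bc[simp]: "h \<in> carrier H \<Longrightarrow> B h \<in> carrier_mat n n" unfolding B_def by (simp add: rc)
lemma sc[simp]: "g \<in> carrier G \<Longrightarrow> \<sigma> g \<in> carrier_mat d d" using srep by (simp add: is_rep_def)
lemma A_dim[simp]: "g \<in> carrier G \<Longrightarrow> dim_row (A g) = n" "g \<in> carrier G \<Longrightarrow> dim_col (A g) = n"
  by (metis carrier_matD Ac)+
lemma B_dim[simp]: "h \<in> carrier H \<Longrightarrow> dim_row (B h) = n" "h \<in> carrier H \<Longrightarrow> dim_col (B h) = n"
  by (metis carrier_matD Bc)+
lemma Ec[simp]: "E i j \<in> carrier_mat n n" by (simp add: E_def)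
lemma Esc[simp]: "Es \<in> carrier_mat n n" by (simp add: Es_def)
lemma Es_dim[simp]: "dim_row Es = n" "dim_col Es = n" by (simp_all add: Es_def)
lemma E_dim[simp]: "dim_row (E i j) = n" "dim_col (E i j) = n" by (simp_all add: E_def)

lemma rmult: "x \<in> carrier (G \<times>\<times> H) \<Longrightarrow> y \<in> carrier (G \<times>\<times> H) \<Longrightarrow> \<rho> (x \<otimes>\<^bsub>G \<times>\<times> H\<^esub> y) = \<rho> x * \<rho> y"
  using rrep unfolding is_rep_def by blast

lemma Arep: "is_rep G n A"
  unfolding is_rep_def
proof (intro conjI ballI)
  show "A \<one>\<^bsub>G\<^esub> = 1\<^sub>m n" using rrep by (simp add: is_rep_def A_def)
  fix x y assume x: "x \<in> carrier G" and y: "y \<in> carrier G"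
  show "A (x \<otimes>\<^bsub>G\<^esub> y) = A x * A y"
    using rmult[of "(x, \<one>\<^bsub>H\<^esub>)" "(y, \<one>\<^bsub>H\<^esub>)"] x y by (simp add: A_def)
qed simp

lemma Brep: "is_rep H n B"
  unfolding is_rep_def
proof (intro conjI ballI)
  show "B \<one>\<^bsub>H\<^esub> = 1\<^sub>m n" using rrep by (simp add: is_rep_def B_def)
  fix x y assume x: "x \<in> carrier H" and y: "y \<in> carrier H"
  show "B (x \<otimes>\<^bsub>H\<^esub> y) = B x * B y"
    using rmult[of "(\<one>\<^bsub>G\<^esub>, x)" "(\<one>\<^bsub>G\<^esub>, y)"] x y by (simp add: B_def)
qed simp

lemma AB: "g \<in> carrier G \<Longrightarrow> h \<in> carrier H \<Longrightarrow> A g * B h = \<rho> (g,h)"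
  using rmult[of "(g, \<one>\<^bsub>H\<^esub>)" "(\<one>\<^bsub>G\<^esub>, h)"] by (simp add: A_def B_def)

lemma BA: "g \<in> carrier G \<Longrightarrow> h \<in> carrier H \<Longrightarrow> B h * A g = \<rho> (g,h)"
  using rmult[of "(\<one>\<^bsub>G\<^esub>, h)" "(g, \<one>\<^bsub>H\<^esub>)"] by (simp add: A_def B_def)

lemma Four_B: "h \<in> carrier H \<Longrightarrow> B h * Four G A n f = Four G A n f * B h"
  by (rule G.Four_comm[OF Arep Bc]) (simp_all add: AB BA)

lemma E_mult:
  assumes "i < d" "j < d" "k < d" "l < d"
  shows "E i j * E k l = (if j = k then E i l else 0\<^sub>m n n)"
proof -
  have "E i j * E k l = Four G A n (\<lambda>x. \<Sum>y\<in>carrier G. c0 * \<sigma> (inv\<^bsub>G\<^esub> y) $$ (j,i) * (c0 * \<sigma> (inv\<^bsub>G\<^esub> (inv\<^bsub>G\<^esub> y \<otimes>\<^bsub>G\<^esub> x)) $$ (l,k)))"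
    unfolding E_def by (rule G.Four_mult[OF Arep])
  also have "\<dots> = Four G A n (\<lambda>x. c0 * c0 * (if j = k then of_nat (card (carrier G)) / of_nat d * \<sigma> (inv\<^bsub>G\<^esub> x) $$ (l,i) else 0))"
    by (rule Four_cong) (simp add: G.conv_orth[OF finG sirr assms, symmetric] sum_distrib_left mult_ac)
  also have "\<dots> = (if j = k then E i l else 0\<^sub>m n n)"
    using dpos Gne by (auto simp: E_def c0_def Four_zero intro!: Four_cong)
  finally show ?thesis .
qed

lemma chi_trace: "g \<in> carrier G \<Longrightarrow> chi g = mat_trace (\<sigma> g)"
  using carrier_matD(1)[OF sc] by (simp add: chi_def mat_trace_def)

lemma chi_comm: "a \<in> carrier G \<Longrightarrow> b \<in> carrier G \<Longrightarrow> chi (a \<otimes>\<^bsub>G\<^esub> b) = chi (b \<otimes>\<^bsub>G\<^esub> a)"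
  using srep mat_trace_comm[OF sc sc, of a b] by (simp add: chi_trace is_rep_def)

lemma Es_A: "h \<in> carrier G \<Longrightarrow> Es * A h = A h * Es"
  unfolding Es_def G.Four_lmul[OF Arep] G.Four_rmul[OF Arep]
  by (rule Four_cong) (simp add: G.inv_mult_group chi_comm)

lemma Es_B: "h \<in> carrier H \<Longrightarrow> Es * B h = B h * Es"
  unfolding Es_def by (simp add: Four_B)

lemma Es_sq: "Es * Es = Es"
proof -
  have "Es * Es = Four G A n (\<lambda>x. \<Sum>y\<in>carrier G. c0 * chi (inv\<^bsub>G\<^esub> y) * (c0 * chi (inv\<^bsub>G\<^esub> (inv\<^bsub>G\<^esub> y \<otimes>\<^bsub>G\<^esub> x))))"
    unfolding Es_def by (rule G.Four_mult[OF Arep])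
  also have "\<dots> = Es"
    unfolding Es_def
  proof (rule Four_cong)
    fix x assume x: "x \<in> carrier G"
    have "(\<Sum>y\<in>carrier G. c0 * chi (inv\<^bsub>G\<^esub> y) * (c0 * chi (inv\<^bsub>G\<^esub> (inv\<^bsub>G\<^esub> y \<otimes>\<^bsub>G\<^esub> x))))
       = (\<Sum>y\<in>carrier G. c0 * c0 * ((\<Sum>i<d. \<sigma> (inv\<^bsub>G\<^esub> y) $$ (i,i)) * (\<Sum>j<d. \<sigma> (inv\<^bsub>G\<^esub> (inv\<^bsub>G\<^esub> y \<otimes>\<^bsub>G\<^esub> x)) $$ (j,j))))"
      by (rule sum.cong[OF refl]) (simp add: chi_def mult_ac)
    also have "\<dots> = c0 * c0 * (\<Sum>y\<in>carrier G. (\<Sum>i<d. \<sigma> (inv\<^bsub>G\<^esub> y) $$ (i,i)) * (\<Sum>j<d. \<sigma> (inv\<^bsub>G\<^esub> (inv\<^bsub>G\<^esub> y \<otimes>\<^bsub>G\<^esub> x)) $$ (j,j)))"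
      by (rule sum_distrib_left[symmetric])
    also have "\<dots> = c0 * c0 * (\<Sum>i<d. \<Sum>j<d. \<Sum>y\<in>carrier G. \<sigma> (inv\<^bsub>G\<^esub> y) $$ (i,i) * \<sigma> (inv\<^bsub>G\<^esub> (inv\<^bsub>G\<^esub> y \<otimes>\<^bsub>G\<^esub> x)) $$ (j,j))"
      by (simp only: sum_product, subst sum.swap, rule arg_cong[where f="\<lambda>t. c0 * c0 * t"], rule sum.cong[OF refl], rule sum.swap)
    also have "\<dots> = c0 * c0 * (\<Sum>i<d. \<Sum>j<d. if i = j then of_nat (card (carrier G)) / of_nat d * \<sigma> (inv\<^bsub>G\<^esub> x) $$ (j,i) else 0)"
      using x by (simp add: G.conv_orth[OF finG sirr])
    also have "\<dots> = c0 * c0 * (of_nat (card (carrier G)) / of_nat d) * chi (inv\<^bsub>G\<^esub> x)"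
      by (simp add: chi_def sum_distrib_left sum_divide_distrib mult_ac)
    also have "\<dots> = c0 * chi (inv\<^bsub>G\<^esub> x)"
      using dpos Gne by (simp add: c0_def)
    finally show "(\<Sum>y\<in>carrier G. c0 * chi (inv\<^bsub>G\<^esub> y) * (c0 * chi (inv\<^bsub>G\<^esub> (inv\<^bsub>G\<^esub> y \<otimes>\<^bsub>G\<^esub> x)))) = c0 * chi (inv\<^bsub>G\<^esub> x)" .
  qed
  finally show ?thesis .
qed

lemma Four_sigma_chi: "Four G \<sigma> d (\<lambda>g. c0 * chi (inv\<^bsub>G\<^esub> g)) = 1\<^sub>m d"
proof (rule eq_matI)
  fix a b assume "a < dim_row (1\<^sub>m d :: complex mat)" "b < dim_col (1\<^sub>m d :: complex mat)"
  then have a: "a < d" and b: "b < d" by auto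
  have "Four G \<sigma> d (\<lambda>g. c0 * chi (inv\<^bsub>G\<^esub> g)) $$ (a,b) =
      c0 * (\<Sum>i<d. \<Sum>g\<in>carrier G. \<sigma> g $$ (a,b) * \<sigma> (inv\<^bsub>G\<^esub> g) $$ (i,i))"
    using a b by (simp add: Four_index chi_def sum_distrib_left sum_distrib_right mult_ac sum.swap[of _ "carrier G"])
  also have "\<dots> = c0 * (\<Sum>i<d. if a = i \<and> b = i then of_nat (card (carrier G)) / of_nat d else 0)"
    using a b by (simp add: G.schur_orth[OF finG sirr])
  also have "\<dots> = (1\<^sub>m d :: complex mat) $$ (a,b)"
    using a b dpos Gne by (auto simp: c0_def)
  finally show "Four G \<sigma> d (\<lambda>g. c0 * chi (inv\<^bsub>G\<^esub> g)) $$ (a,b) = (1\<^sub>m d :: complex mat) $$ (a,b)" .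
qed auto

lemma Es_P: "Es * P = P"
proof -
  have "Es * P = P * Four G \<sigma> d (\<lambda>g. c0 * chi (inv\<^bsub>G\<^esub> g))"
    unfolding Es_def by (rule G.Four_intw[OF Arep srep P]) (simp add: Pint A_def)
  then show ?thesis using P by (simp add: Four_sigma_chi)
qed

lemma Es_rho: "g \<in> carrier G \<Longrightarrow> h \<in> carrier H \<Longrightarrow> Es * \<rho> (g,h) = \<rho> (g,h) * Es"
proof -
  assume g: "g \<in> carrier G" and h: "h \<in> carrier H"
  have "Es * \<rho> (g,h) = Es * (A g * B h)" by (simp add: AB g h)
  also have "\<dots> = (Es * A g) * B h" using assoc_mult_mat[OF Esc Ac[OF g] Bc[OF h]] by simp
  also have "\<dots> = (A g * Es) * B h" using Es_A g by simp
  also have "\<dots> = A g * (Es * B h)" using assoc_mult_mat[OF Ac[OF g] Esc Bc[OF h]] by simp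
  also have "\<dots> = A g * (B h * Es)" using Es_B h by simp
  also have "\<dots> = (A g * B h) * Es" using assoc_mult_mat[OF Ac[OF g] Bc[OF h] Esc] by simp
  finally show ?thesis by (simp add: AB g h)
qed

lemma mat_unit_col: "(M :: complex mat) \<in> carrier_mat k m \<Longrightarrow> i < k \<Longrightarrow> j < m \<Longrightarrow> (M *\<^sub>v unit_vec m j) $ i = M $$ (i,j)"
  by (subst mult_vec_entry[of M k m], auto simp: if_distrib[of "\<lambda>x. _ * x"] cong: if_cong)

lemma mat_eq_by_vec: assumes M: "(M :: complex mat) \<in> carrier_mat k m" and N: "N \<in> carrier_mat k m"
  and eq: "\<And>v. v \<in> carrier_vec m \<Longrightarrow> M *\<^sub>v v = N *\<^sub>v v" shows "M = N"
proof (rule eq_matI)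
  fix i j assume "i < dim_row N" "j < dim_col N"
  then have i: "i < k" and j: "j < m" using N by auto
  show "M $$ (i,j) = N $$ (i,j)"
    using mat_unit_col[OF M i j] mat_unit_col[OF N i j] eq[of "unit_vec m j"] by simp
qed (use M N in auto)

lemma Es_one: "Es = 1\<^sub>m n"
proof -
  define W where "W = (\<lambda>v. Es *\<^sub>v v) ` carrier_vec n"
  have inv: "invariant_subspace (G \<times>\<times> H) n \<rho> W"
    unfolding invariant_subspace_def
  proof (intro conjI ballI allI)
    show "W \<subseteq> carrier_vec n" unfolding W_def using mult_mat_vec_carrier[OF Esc] by auto
    have "Es *\<^sub>v 0\<^sub>v n = 0\<^sub>v n" by (intro eq_vecI) (auto simp: scalar_prod_def)
    then show "0\<^sub>v n \<in> W" unfolding W_def by (intro image_eqI[of _ _ "0\<^sub>v n"]) auto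
    fix x y assume "x \<in> W" "y \<in> W"
    then obtain u v where "u \<in> carrier_vec n" "v \<in> carrier_vec n" "x = Es *\<^sub>v u" "y = Es *\<^sub>v v"
      unfolding W_def by auto
    then show "x + y \<in> W" unfolding W_def
      by (intro image_eqI[of _ _ "u + v"]) (auto simp: mult_add_distrib_mat_vec[OF Esc])
  next
    fix c x assume "x \<in> W"
    then obtain u where "u \<in> carrier_vec n" "x = Es *\<^sub>v u" unfolding W_def by auto
    then show "c \<cdot>\<^sub>v x \<in> W" unfolding W_def
      by (intro image_eqI[of _ _ "c \<cdot>\<^sub>v u"]) (auto simp: mult_mat_vec[OF Esc])
  next
    fix z x assume z: "z \<in> carrier (G \<times>\<times> H)" and "x \<in> W"
    then obtain u where u: "u \<in> carrier_vec n" "x = Es *\<^sub>v u" unfolding W_def by auto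
    obtain g h where gh: "z = (g,h)" "g \<in> carrier G" "h \<in> carrier H" using z by auto
    have "\<rho> z *\<^sub>v x = (\<rho> (g,h) * Es) *\<^sub>v u" using u gh assoc_mult_mat_vec[OF rc[OF gh(2,3)] Esc u(1)] by simp
    also have "\<dots> = (Es * \<rho> (g,h)) *\<^sub>v u" using Es_rho gh by simp
    also have "\<dots> = Es *\<^sub>v (\<rho> (g,h) *\<^sub>v u)" using u gh assoc_mult_mat_vec[OF Esc rc[OF gh(2,3)] u(1)] by simp
    finally show "\<rho> z *\<^sub>v x \<in> W" unfolding W_def using u gh mult_mat_vec_carrier[OF rc[OF gh(2,3)] u(1)] by auto
  qed
  have "W \<noteq> {0\<^sub>v n}"
  proof
    assume W0: "W = {0\<^sub>v n}"
    define u where "u = P *\<^sub>v unit_vec d 0"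
    have "u \<noteq> 0\<^sub>v n"
    proof
      assume "u = 0\<^sub>v n"
      then have "P *\<^sub>v unit_vec d 0 = 0\<^sub>v n" by (simp add: u_def)
      then have "(unit_vec d 0 :: complex vec) = 0\<^sub>v d" using injmD[OF Pinj P unit_vec_carrier[of d 0]] by simp
      then show False using dpos unit_vec_nonzero[of 0 d] by simp
    qed
    moreover have eu: "Es *\<^sub>v u = u" unfolding u_def using Es_P assoc_mult_mat_vec[OF Esc P unit_vec_carrier[of d 0]]
      by simp
    moreover have uc: "u \<in> carrier_vec n" unfolding u_def using P by simp
    moreover have "u \<in> W" unfolding W_def by (rule image_eqI[of u "\<lambda>v. Es *\<^sub>v v" u, OF eu[symmetric] uc])
    ultimately show False using W0 by simp
  qed
  moreover have "W = {0\<^sub>v n} \<or> W = carrier_vec n" using irr inv unfolding irreducible_rep_def by blast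
  ultimately have WW: "W = carrier_vec n" by simp
  have "Es *\<^sub>v v = 1\<^sub>m n *\<^sub>v v" if v: "v \<in> carrier_vec n" for v
  proof -
    obtain w where w: "w \<in> carrier_vec n" "v = Es *\<^sub>v w" using v WW unfolding W_def by auto
    have "Es *\<^sub>v v = (Es * Es) *\<^sub>v w" using w assoc_mult_mat_vec[OF Esc Esc w(1)] by simp
    also have "\<dots> = v" using w Es_sq by simp
    finally show ?thesis using v by simp
  qed
  then show ?thesis by (intro mat_eq_by_vec[OF Esc]) auto
qed

lemma E_AE:
  assumes i: "i < d" and g: "g \<in> carrier G"
  shows "E 0 i * (A g * E i 0) = \<sigma> g $$ (i,i) \<cdot>\<^sub>m E 0 0"
proof -
  have "A g * E i 0 = Four G A n (\<lambda>x. c0 * \<sigma> (inv\<^bsub>G\<^esub> (inv\<^bsub>G\<^esub> g \<otimes>\<^bsub>G\<^esub> x)) $$ (0,i))"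
    unfolding E_def by (rule G.Four_lmul[OF Arep g])
  then have "E 0 i * (A g * E i 0) = Four G A n (\<lambda>x. \<Sum>y\<in>carrier G. c0 * \<sigma> (inv\<^bsub>G\<^esub> y) $$ (i,0) *
      (c0 * \<sigma> (inv\<^bsub>G\<^esub> (inv\<^bsub>G\<^esub> g \<otimes>\<^bsub>G\<^esub> (inv\<^bsub>G\<^esub> y \<otimes>\<^bsub>G\<^esub> x))) $$ (0,i)))"
    unfolding E_def[of 0 i] by (simp add: G.Four_mult[OF Arep])
  also have "\<dots> = Four G A n (\<lambda>x. \<sigma> g $$ (i,i) * (c0 * \<sigma> (inv\<^bsub>G\<^esub> x) $$ (0,0)))"
  proof (rule Four_cong)
    fix x assume x: "x \<in> carrier G"
    have "(\<Sum>y\<in>carrier G. c0 * \<sigma> (inv\<^bsub>G\<^esub> y) $$ (i,0) *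
      (c0 * \<sigma> (inv\<^bsub>G\<^esub> (inv\<^bsub>G\<^esub> g \<otimes>\<^bsub>G\<^esub> (inv\<^bsub>G\<^esub> y \<otimes>\<^bsub>G\<^esub> x))) $$ (0,i))) =
      (\<Sum>y\<in>carrier G. c0 * \<sigma> (inv\<^bsub>G\<^esub> y) $$ (i,0) *
      (c0 * (\<Sum>q<d. \<sigma> (inv\<^bsub>G\<^esub> (inv\<^bsub>G\<^esub> y \<otimes>\<^bsub>G\<^esub> x)) $$ (0,q) * \<sigma> g $$ (q,i))))"
    proof (rule sum.cong[OF refl])
      fix y assume y: "y \<in> carrier G"
      have "inv\<^bsub>G\<^esub> (inv\<^bsub>G\<^esub> g \<otimes>\<^bsub>G\<^esub> (inv\<^bsub>G\<^esub> y \<otimes>\<^bsub>G\<^esub> x)) = inv\<^bsub>G\<^esub> (inv\<^bsub>G\<^esub> y \<otimes>\<^bsub>G\<^esub> x) \<otimes>\<^bsub>G\<^esub> g"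
        using x y g by (simp add: G.inv_mult_group)
      then show "c0 * \<sigma> (inv\<^bsub>G\<^esub> y) $$ (i,0) * (c0 * \<sigma> (inv\<^bsub>G\<^esub> (inv\<^bsub>G\<^esub> g \<otimes>\<^bsub>G\<^esub> (inv\<^bsub>G\<^esub> y \<otimes>\<^bsub>G\<^esub> x))) $$ (0,i)) =
        c0 * \<sigma> (inv\<^bsub>G\<^esub> y) $$ (i,0) * (c0 * (\<Sum>q<d. \<sigma> (inv\<^bsub>G\<^esub> (inv\<^bsub>G\<^esub> y \<otimes>\<^bsub>G\<^esub> x)) $$ (0,q) * \<sigma> g $$ (q,i)))"
        using rep_entry[OF srep _ g _ i, of "inv\<^bsub>G\<^esub> (inv\<^bsub>G\<^esub> y \<otimes>\<^bsub>G\<^esub> x)" 0] x y g dpos by simp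
    qed
    also have "\<dots> = c0 * c0 * (\<Sum>q<d. \<sigma> g $$ (q,i) * (\<Sum>y\<in>carrier G. \<sigma> (inv\<^bsub>G\<^esub> y) $$ (i,0) * \<sigma> (inv\<^bsub>G\<^esub> (inv\<^bsub>G\<^esub> y \<otimes>\<^bsub>G\<^esub> x)) $$ (0,q)))"
      by (simp add: sum_distrib_left mult_ac, rule sum.swap)
    also have "\<dots> = c0 * c0 * (\<Sum>q<d. \<sigma> g $$ (q,i) * (if i = q then of_nat (card (carrier G)) / of_nat d * \<sigma> (inv\<^bsub>G\<^esub> x) $$ (0,0) else 0))"
      using i dpos x by (simp add: G.conv_orth[OF finG sirr])
    also have "\<dots> = c0 * c0 * (\<sigma> g $$ (i,i) * (of_nat (card (carrier G)) / of_nat d * \<sigma> (inv\<^bsub>G\<^esub> x) $$ (0,0)))"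
      using i by (simp add: if_distrib[of "\<lambda>t. _ * t"] cong: if_cong)
    also have "\<dots> = \<sigma> g $$ (i,i) * (c0 * \<sigma> (inv\<^bsub>G\<^esub> x) $$ (0,0))"
      using dpos Gne by (simp add: c0_def)
    finally show "(\<Sum>y\<in>carrier G. c0 * \<sigma> (inv\<^bsub>G\<^esub> y) $$ (i,0) *
      (c0 * \<sigma> (inv\<^bsub>G\<^esub> (inv\<^bsub>G\<^esub> g \<otimes>\<^bsub>G\<^esub> (inv\<^bsub>G\<^esub> y \<otimes>\<^bsub>G\<^esub> x))) $$ (0,i))) =
      \<sigma> g $$ (i,i) * (c0 * \<sigma> (inv\<^bsub>G\<^esub> x) $$ (0,0))" .
  qed
  also have "\<dots> = \<sigma> g $$ (i,i) \<cdot>\<^sub>m E 0 0"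
    unfolding E_def by (rule Four_smult)
  finally show ?thesis .
qed

lemma E_mult_r: "i < d \<Longrightarrow> j < d \<Longrightarrow> k < d \<Longrightarrow> l < d \<Longrightarrow> M \<in> carrier_mat n m \<Longrightarrow>
  E i j * (E k l * M) = (if j = k then E i l * M else 0\<^sub>m n m)"
  by (simp add: assoc_mult_mat[symmetric, of "E i j" n n "E k l" n M m] E_mult)

lemma Es_sum: "Es = Four G A n (\<lambda>x. \<Sum>i<d. c0 * \<sigma> (inv\<^bsub>G\<^esub> x) $$ (i,i))"
  unfolding Es_def chi_def by (simp add: sum_distrib_left)

lemma B_E_r: assumes h: "h \<in> carrier H" and M: "dim_row M = n"
  shows "B h * (E i j * M) = E i j * (B h * M)"
proof -
  have "B h * (E i j * M) = (B h * E i j) * M" using h M by simp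
  also have "\<dots> = (E i j * B h) * M" unfolding E_def using Four_B[OF h] by simp
  also have "\<dots> = E i j * (B h * M)" using h M by simp
  finally show ?thesis .
qed

lemma trace_formula:
  assumes g: "g \<in> carrier G" and h: "h \<in> carrier H"
  shows "mat_trace (\<rho> (g,h)) = chi g * mat_trace (B h * E 0 0)"
proof -
  have Bc': "B h \<in> carrier_mat n n" using h by simp
  have Ac': "A g \<in> carrier_mat n n" using g by simp
  have "mat_trace (\<rho> (g,h)) = mat_trace (\<rho> (g,h) * Es)" using rc[OF g h] by (simp add: Es_one)
  also have "\<dots> = (\<Sum>i<d. mat_trace (\<rho> (g,h) * E i i))"
    unfolding Es_sum E_def by (rule trace_Four_sum[OF rc[OF g h]]) simp
  also have "\<dots> = (\<Sum>i<d. \<sigma> g $$ (i,i) * mat_trace (B h * E 0 0))"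
  proof (rule sum.cong[OF refl])
    fix i assume "i \<in> {..<d}" then have i: "i < d" by simp
    have d0: "0 < d" using dpos .
    have "E i i = E i 0 * (E 0 0 * E 0 i)" using i d0 by (simp add: E_mult)
    then have "mat_trace (\<rho> (g,h) * E i i) = mat_trace (A g * (B h * (E i 0 * (E 0 0 * E 0 i))))"
      using g h by (simp add: AB[symmetric])
    also have "\<dots> = mat_trace ((A g * (B h * (E i 0 * E 0 0))) * E 0 i)"
      using Ac' Bc' by simp
    also have "\<dots> = mat_trace (E 0 i * (A g * (B h * (E i 0 * E 0 0))))"
      by (rule mat_trace_comm[of _ n n]) (use g h in \<open>auto intro!: carrier_matI\<close>)
    also have "B h * (E i 0 * E 0 0) = E i 0 * (B h * E 0 0)"
      by (rule B_E_r[OF h]) simp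
    also have "E 0 i * (A g * (E i 0 * (B h * E 0 0))) = (E 0 i * (A g * E i 0)) * (B h * E 0 0)"
      using Ac' Bc' by simp
    also have "\<dots> = \<sigma> g $$ (i,i) \<cdot>\<^sub>m (E 0 0 * (B h * E 0 0))"
      using E_AE[OF i g] mult_smult_assoc_mat[OF Ec mult_carrier_mat[OF Bc' Ec]] by simp
    also have "mat_trace \<dots> = \<sigma> g $$ (i,i) * mat_trace (E 0 0 * (B h * E 0 0))"
      by (rule trace_smult[of _ n]) (use h in \<open>auto intro!: carrier_matI\<close>)
    also have "mat_trace (E 0 0 * (B h * E 0 0)) = mat_trace ((B h * E 0 0) * E 0 0)"
      by (rule mat_trace_comm[of _ n n]) (use g h in \<open>auto intro!: carrier_matI\<close>)
    also have "\<dots> = mat_trace (B h * E 0 0)"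
      using Bc' d0 by (simp add: E_mult)
    finally show "mat_trace (\<rho> (g,h) * E i i) = \<sigma> g $$ (i,i) * mat_trace (B h * E 0 0)" .
  qed
  also have "\<dots> = chi g * mat_trace (B h * E 0 0)"
    by (simp add: chi_def sum_distrib_right)
  finally show ?thesis .
qed

end


lemma smult_one_vec: "(x :: complex vec) \<in> carrier_vec k \<Longrightarrow> (c \<cdot>\<^sub>m 1\<^sub>m k) *\<^sub>v x = c \<cdot>\<^sub>v x"
proof (intro eq_vecI)
  fix i assume x: "x \<in> carrier_vec k" and i: "i < dim_vec (c \<cdot>\<^sub>v x)"
  then have i: "i < k" by simp
  have "((c \<cdot>\<^sub>m 1\<^sub>m k) *\<^sub>v x) $ i = (\<Sum>j<k. (if i = j then c else 0) * x $ j)"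
    by (subst mult_vec_entry[OF _ x i]) (auto intro!: sum.cong simp: i)
  also have "\<dots> = c * x $ i" using i by (simp add: if_distrib[of "\<lambda>t. t * _"] cong: if_cong)
  finally show "((c \<cdot>\<^sub>m 1\<^sub>m k) *\<^sub>v x) $ i = (c \<cdot>\<^sub>v x) $ i" using i x by simp
qed simp

context PR begin

lemma E00_sq: "E 0 0 * E 0 0 = E 0 0" using dpos by (simp add: E_mult)

definition U where "U = (\<lambda>v. E 0 0 *\<^sub>v v) ` carrier_vec n"

lemma U_subsp: "subsp n U"
  unfolding subsp_def
proof (intro conjI ballI allI)
  show "U \<subseteq> carrier_vec n" unfolding U_def using mult_mat_vec_carrier[OF Ec] by auto
  have "E 0 0 *\<^sub>v 0\<^sub>v n = 0\<^sub>v n" by (intro eq_vecI) (auto simp: scalar_prod_def)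
  then show "0\<^sub>v n \<in> U" unfolding U_def by (intro image_eqI[of _ _ "0\<^sub>v n"]) auto
  fix x y assume "x \<in> U" "y \<in> U"
  then obtain u v where "u \<in> carrier_vec n" "v \<in> carrier_vec n" "x = E 0 0 *\<^sub>v u" "y = E 0 0 *\<^sub>v v"
    unfolding U_def by auto
  then show "x + y \<in> U" unfolding U_def
    by (intro image_eqI[of _ _ "u + v"]) (auto simp: mult_add_distrib_mat_vec[OF Ec])
next
  fix c x assume "x \<in> U"
  then obtain u where "u \<in> carrier_vec n" "x = E 0 0 *\<^sub>v u" unfolding U_def by auto
  then show "c \<cdot>\<^sub>v x \<in> U" unfolding U_def
    by (intro image_eqI[of _ _ "c \<cdot>\<^sub>v u"]) (auto simp: mult_mat_vec[OF Ec])
qed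

lemma U_fix: "w \<in> U \<Longrightarrow> E 0 0 *\<^sub>v w = w"
proof -
  assume "w \<in> U"
  then obtain u where u: "u \<in> carrier_vec n" "w = E 0 0 *\<^sub>v u" unfolding U_def by auto
  then show ?thesis using assoc_mult_mat_vec[OF Ec Ec u(1), of 0 0 0 0] E00_sq by simp
qed

definition m where "m = (SOME m. \<exists>Q. Q \<in> carrier_mat n m \<and> injm Q \<and> (\<forall>v\<in>carrier_vec m. Q *\<^sub>v v \<in> U) \<and>
           (\<forall>w\<in>U. \<exists>v\<in>carrier_vec m. Q *\<^sub>v v = w))"
definition PU where "PU = (SOME Q. Q \<in> carrier_mat n m \<and> injm Q \<and> (\<forall>v\<in>carrier_vec m. Q *\<^sub>v v \<in> U) \<and>
           (\<forall>w\<in>U. \<exists>v\<in>carrier_vec m. Q *\<^sub>v v = w))"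

lemma PU_props: "PU \<in> carrier_mat n m \<and> injm PU \<and> (\<forall>v\<in>carrier_vec m. PU *\<^sub>v v \<in> U) \<and>
           (\<forall>w\<in>U. \<exists>v\<in>carrier_vec m. PU *\<^sub>v v = w)"
proof -
  have "\<exists>m Q. Q \<in> carrier_mat n m \<and> injm Q \<and> (\<forall>v\<in>carrier_vec m. Q *\<^sub>v v \<in> U) \<and>
           (\<forall>w\<in>U. \<exists>v\<in>carrier_vec m. Q *\<^sub>v v = w)" by (rule coord[OF U_subsp])
  then have "\<exists>Q. Q \<in> carrier_mat n m \<and> injm Q \<and> (\<forall>v\<in>carrier_vec m. Q *\<^sub>v v \<in> U) \<and>
           (\<forall>w\<in>U. \<exists>v\<in>carrier_vec m. Q *\<^sub>v v = w)" unfolding m_def by (rule someI_ex)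
  then show ?thesis unfolding PU_def by (rule someI_ex)
qed

lemma PUc[simp]: "PU \<in> carrier_mat n m" using PU_props by simp
lemma PU_dim[simp]: "dim_row PU = n" "dim_col PU = m" using carrier_matD[OF PUc] by auto
lemma PU_inj: "injm PU" using PU_props by simp
lemma PU_U: "v \<in> carrier_vec m \<Longrightarrow> PU *\<^sub>v v \<in> U" using PU_props by simp
lemma U_PU: "w \<in> U \<Longrightarrow> \<exists>v\<in>carrier_vec m. PU *\<^sub>v v = w" using PU_props by simp

lemma E00_PU: "E 0 0 * PU = PU"
  by (rule mat_eq_by_vec[of _ n m]) (auto simp: assoc_mult_mat_vec[OF Ec PUc] U_fix PU_U)

definition L where "L = (SOME N. N \<in> carrier_mat m n \<and> PU * N = E 0 0)"

lemma L_props: "L \<in> carrier_mat m n \<and> PU * L = E 0 0"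
proof -
  have "\<exists>N\<in>carrier_mat m n. PU * N = E 0 0"
  proof (rule factor[OF PUc Ec])
    fix j assume j: "j < n"
    have "col (E 0 0) j = E 0 0 *\<^sub>v unit_vec n j"
      using j by (intro eq_vecI) (simp_all add: mat_unit_col[OF Ec])
    then have "col (E 0 0) j \<in> U" unfolding U_def by auto
    then show "\<exists>v\<in>carrier_vec m. PU *\<^sub>v v = col (E 0 0) j" using U_PU by blast
  qed
  then show ?thesis unfolding L_def by (metis (mono_tags, lifting) someI_ex)
qed

lemma Lc[simp]: "L \<in> carrier_mat m n" using L_props by simp
lemma L_dim[simp]: "dim_row L = m" "dim_col L = n" using carrier_matD[OF Lc] by auto
lemma PU_L: "PU * L = E 0 0" using L_props by simp

lemma L_PU: "L * PU = 1\<^sub>m m"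
proof (rule inj_cancel[OF PUc PU_inj])
  have "PU * (L * PU) = (PU * L) * PU" by simp
  also have "\<dots> = PU" by (simp add: PU_L E00_PU)
  finally show "PU * (L * PU) = PU * 1\<^sub>m m" by simp
qed auto

definition tau where "tau h = L * (B h * PU)"

lemma tau_dim[simp]: "dim_row (tau h) = m" "dim_col (tau h) = m" by (simp_all add: tau_def)

lemma tauc[simp]: "h \<in> carrier H \<Longrightarrow> tau h \<in> carrier_mat m m"
  unfolding tau_def by (auto intro!: carrier_matI)

lemma B_PU: "h \<in> carrier H \<Longrightarrow> B h * PU = PU * tau h"
proof -
  assume h: "h \<in> carrier H"
  have "PU * tau h = (PU * L) * (B h * PU)" unfolding tau_def using h by simp
  also have "\<dots> = E 0 0 * (B h * PU)" by (simp add: PU_L)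
  also have "\<dots> = B h * (E 0 0 * PU)" using B_E_r[OF h, of PU 0 0] by simp
  also have "\<dots> = B h * PU" by (simp add: E00_PU)
  finally show ?thesis by simp
qed

lemma tau_rep: "is_rep H m tau"
  unfolding is_rep_def
proof (intro conjI ballI)
  show "tau h \<in> carrier_mat m m" if "h \<in> carrier H" for h using that by simp
  show "tau \<one>\<^bsub>H\<^esub> = 1\<^sub>m m" using Brep L_PU unfolding tau_def is_rep_def by simp
  fix x y assume x: "x \<in> carrier H" and y: "y \<in> carrier H"
  have "tau (x \<otimes>\<^bsub>H\<^esub> y) = L * (B x * (B y * PU))"
    unfolding tau_def using Brep x y unfolding is_rep_def by simp
  also have "\<dots> = L * (B x * (PU * tau y))" by (simp add: B_PU y)
  also have "\<dots> = (L * (B x * PU)) * tau y" using x y by simp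
  finally show "tau (x \<otimes>\<^bsub>H\<^esub> y) = tau x * tau y" unfolding tau_def .
qed

lemma trace_tau: "h \<in> carrier H \<Longrightarrow> mat_trace (B h * E 0 0) = mat_trace (tau h)"
proof -
  assume h: "h \<in> carrier H"
  have "mat_trace (B h * E 0 0) = mat_trace ((B h * PU) * L)" using h by (simp add: PU_L)
  also have "\<dots> = mat_trace (L * (B h * PU))"
    by (rule mat_trace_comm[of _ n m]) (use h in \<open>auto intro!: carrier_matI\<close>)
  finally show ?thesis by (simp add: tau_def)
qed

lemma m_pos: "m > 0"
proof -
  have "mat_trace (\<rho> (\<one>\<^bsub>G\<^esub>, \<one>\<^bsub>H\<^esub>)) = chi \<one>\<^bsub>G\<^esub> * mat_trace (B \<one>\<^bsub>H\<^esub> * E 0 0)"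
    by (rule trace_formula) simp_all
  moreover have "\<rho> (\<one>\<^bsub>G\<^esub>, \<one>\<^bsub>H\<^esub>) = 1\<^sub>m n" using rrep by (simp add: is_rep_def)
  moreover have "chi \<one>\<^bsub>G\<^esub> = of_nat d" using srep by (simp add: chi_trace is_rep_def)
  moreover have "mat_trace (B \<one>\<^bsub>H\<^esub> * E 0 0) = of_nat m"
    using trace_tau[of "\<one>\<^bsub>H\<^esub>"] tau_rep by (simp add: is_rep_def)
  ultimately have "(of_nat n :: complex) = of_nat d * of_nat m" by simp
  then have "n = d * m" by (metis of_nat_eq_iff of_nat_mult)
  then show ?thesis using npos by (cases m) auto
qed

definition Mg where "Mg g = L * (E 0 0 * A g)"

lemma Mg_dim[simp]: "g \<in> carrier G \<Longrightarrow> dim_row (Mg g) = m" "g \<in> carrier G \<Longrightarrow> dim_col (Mg g) = n"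
  by (simp_all add: Mg_def)
lemma Mgc[simp]: "g \<in> carrier G \<Longrightarrow> Mg g \<in> carrier_mat m n"
  by (auto intro!: carrier_matI)

lemma PUL_E: "dim_row M = n \<Longrightarrow> PU * (L * (E 0 0 * M)) = E 0 0 * M"
proof -
  assume M: "dim_row M = n"
  have "PU * (L * (E 0 0 * M)) = (PU * L) * (E 0 0 * M)" using M by simp
  also have "\<dots> = E 0 0 * (E 0 0 * M)" by (simp add: PU_L)
  also have "\<dots> = (E 0 0 * E 0 0) * M" using M by simp
  finally show ?thesis by (simp add: E00_sq)
qed

lemma K1: assumes g: "g \<in> carrier G" and g': "g' \<in> carrier G" and h: "h \<in> carrier H"
  shows "Mg g * \<rho> (g',h) = tau h * Mg (g \<otimes>\<^bsub>G\<^esub> g')"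
proof -
  have gg: "g \<otimes>\<^bsub>G\<^esub> g' \<in> carrier G" using g g' by simp
  have "Mg g * \<rho> (g',h) = L * (E 0 0 * (A g * (A g' * B h)))" unfolding Mg_def using g g' h by (simp add: AB[symmetric])
  also have "A g * (A g' * B h) = A (g \<otimes>\<^bsub>G\<^esub> g') * B h"
    using Arep g g' h unfolding is_rep_def by simp
  also have "\<dots> = B h * A (g \<otimes>\<^bsub>G\<^esub> g')" using gg h by (simp add: AB BA)
  also have "E 0 0 * (B h * A (g \<otimes>\<^bsub>G\<^esub> g')) = B h * (E 0 0 * A (g \<otimes>\<^bsub>G\<^esub> g'))"
    using B_E_r[OF h, of "A (g \<otimes>\<^bsub>G\<^esub> g')" 0 0] gg by simp
  also have "\<dots> = B h * (PU * (L * (E 0 0 * A (g \<otimes>\<^bsub>G\<^esub> g'))))" using PUL_E gg by simp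
  also have "L * \<dots> = tau h * Mg (g \<otimes>\<^bsub>G\<^esub> g')" unfolding tau_def Mg_def using gg h by simp
  finally show ?thesis .
qed

lemma K2: assumes g: "g \<in> carrier G"
  shows "Mg g * PU = \<sigma> g $$ (0,0) \<cdot>\<^sub>m 1\<^sub>m m"
proof -
  have "Mg g * PU = L * (E 0 0 * (A g * (E 0 0 * PU)))" unfolding Mg_def using g by (simp add: E00_PU)
  also have "\<dots> = L * ((E 0 0 * (A g * E 0 0)) * PU)" using g by simp
  also have "\<dots> = L * ((\<sigma> g $$ (0,0) \<cdot>\<^sub>m E 0 0) * PU)" using E_AE[OF dpos g] by simp
  also have "\<dots> = \<sigma> g $$ (0,0) \<cdot>\<^sub>m (L * (E 0 0 * PU))"
    by (simp add: mult_smult_assoc_mat[OF Ec PUc] mult_smult_distrib[OF Lc mult_carrier_mat[OF Ec PUc]])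
  finally show ?thesis by (simp add: E00_PU L_PU)
qed

lemma tau_irr: "irreducible_rep H m tau"
  unfolding irreducible_rep_def
proof (intro conjI m_pos tau_rep allI impI)
  fix Xs assume Xs: "invariant_subspace H m tau Xs"
  then have Xc: "Xs \<subseteq> carrier_vec m" and X0: "0\<^sub>v m \<in> Xs"
    and Xadd: "\<And>v w. v \<in> Xs \<Longrightarrow> w \<in> Xs \<Longrightarrow> v + w \<in> Xs"
    and Xsm: "\<And>c v. v \<in> Xs \<Longrightarrow> c \<cdot>\<^sub>v v \<in> Xs"
    and Xt: "\<And>h v. h \<in> carrier H \<Longrightarrow> v \<in> Xs \<Longrightarrow> tau h *\<^sub>v v \<in> Xs"
    unfolding invariant_subspace_def by auto
  define Y where "Y = {v \<in> carrier_vec n. \<forall>g\<in>carrier G. Mg g *\<^sub>v v \<in> Xs}"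
  have Yinv: "invariant_subspace (G \<times>\<times> H) n \<rho> Y"
    unfolding invariant_subspace_def
  proof (intro conjI ballI allI)
    show "Y \<subseteq> carrier_vec n" unfolding Y_def by auto
    have "Mg g *\<^sub>v 0\<^sub>v n = 0\<^sub>v m" if "g \<in> carrier G" for g
      using that by (intro eq_vecI) (auto simp: scalar_prod_def)
    then show "0\<^sub>v n \<in> Y" unfolding Y_def using X0 by auto
  next
    fix v w assume "v \<in> Y" "w \<in> Y"
    then show "v + w \<in> Y" unfolding Y_def using Xadd by (auto simp: mult_add_distrib_mat_vec[OF Mgc])
  next
    fix c v assume "v \<in> Y"
    then show "c \<cdot>\<^sub>v v \<in> Y" unfolding Y_def using Xsm by (auto simp: mult_mat_vec[OF Mgc])
  next
    fix z v assume z: "z \<in> carrier (G \<times>\<times> H)" and v: "v \<in> Y"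
    obtain g' h where gh: "z = (g',h)" "g' \<in> carrier G" "h \<in> carrier H" using z by auto
    have vc: "v \<in> carrier_vec n" using v unfolding Y_def by auto
    have "Mg g *\<^sub>v (\<rho> (g',h) *\<^sub>v v) \<in> Xs" if g: "g \<in> carrier G" for g
    proof -
      have gg: "g \<otimes>\<^bsub>G\<^esub> g' \<in> carrier G" using g gh by simp
      have "Mg g *\<^sub>v (\<rho> (g',h) *\<^sub>v v) = (Mg g * \<rho> (g',h)) *\<^sub>v v"
        using assoc_mult_mat_vec[OF Mgc[OF g] rc[OF gh(2,3)] vc] by simp
      also have "\<dots> = tau h *\<^sub>v (Mg (g \<otimes>\<^bsub>G\<^esub> g') *\<^sub>v v)"
        using K1[OF g gh(2,3)] assoc_mult_mat_vec[OF tauc[OF gh(3)] Mgc[OF gg] vc] by simp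
      finally show ?thesis using Xt[OF gh(3)] v gg unfolding Y_def by simp
    qed
    then show "\<rho> z *\<^sub>v v \<in> Y" unfolding Y_def using gh vc mult_mat_vec_carrier[OF rc[OF gh(2,3)] vc] by auto
  qed
  have "Y = {0\<^sub>v n} \<or> Y = carrier_vec n" using irr Yinv unfolding irreducible_rep_def by blast
  then show "Xs = {0\<^sub>v m} \<or> Xs = carrier_vec m"
  proof
    assume Y0: "Y = {0\<^sub>v n}"
    have "Xs \<subseteq> {0\<^sub>v m}"
    proof
      fix x assume x: "x \<in> Xs"
      have xc: "x \<in> carrier_vec m" using x Xc by auto
      have "Mg g *\<^sub>v (PU *\<^sub>v x) \<in> Xs" if g: "g \<in> carrier G" for g
      proof -
        have "Mg g *\<^sub>v (PU *\<^sub>v x) = (Mg g * PU) *\<^sub>v x"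
          using assoc_mult_mat_vec[OF Mgc[OF g] PUc xc] by simp
        also have "\<dots> = \<sigma> g $$ (0,0) \<cdot>\<^sub>v x" using K2[OF g] xc by (simp add: smult_one_vec)
        finally show ?thesis using Xsm[OF x] by simp
      qed
      then have "PU *\<^sub>v x \<in> Y" unfolding Y_def using mult_mat_vec_carrier[OF PUc xc] by auto
      then have "PU *\<^sub>v x = 0\<^sub>v n" using Y0 by simp
      then have "x = 0\<^sub>v m" using injmD[OF PU_inj PUc xc] by simp
      then show "x \<in> {0\<^sub>v m}" by simp
    qed
    then show ?thesis using X0 by auto
  next
    assume Yc: "Y = carrier_vec n"
    have "carrier_vec m \<subseteq> Xs"
    proof
      fix y :: "complex vec" assume y: "y \<in> carrier_vec m"
      have "PU *\<^sub>v y \<in> Y" using Yc mult_mat_vec_carrier[OF PUc y] by simp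
      then have "Mg \<one>\<^bsub>G\<^esub> *\<^sub>v (PU *\<^sub>v y) \<in> Xs" unfolding Y_def by simp
      moreover have "Mg \<one>\<^bsub>G\<^esub> *\<^sub>v (PU *\<^sub>v y) = y"
      proof -
        have "Mg \<one>\<^bsub>G\<^esub> *\<^sub>v (PU *\<^sub>v y) = (Mg \<one>\<^bsub>G\<^esub> * PU) *\<^sub>v y"
          using assoc_mult_mat_vec[OF Mgc[OF G.one_closed] PUc y] by simp
        also have "\<dots> = y" using K2[OF G.one_closed] srep dpos y by (simp add: is_rep_def smult_one_vec)
        finally show ?thesis .
      qed
      ultimately show "y \<in> Xs" by simp
    qed
    then show ?thesis using Xc by auto
  qed
qed

end


lemma prod_decomp:
  assumes G: "group G" and H: "group H" and fG: "finite (carrier G)" and fH: "finite (carrier H)"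
    and irr: "irr_char (G \<times>\<times> H) \<Theta>"
  shows "\<exists>\<chi> \<psi>. irr_char G \<chi> \<and> irr_char H \<psi> \<and>
           (\<forall>g\<in>carrier G. \<forall>h\<in>carrier H. \<Theta> (g,h) = \<chi> g * \<psi> h)"
proof -
  interpret G: group G by fact
  interpret H: group H by fact
  obtain n \<rho> where irrr: "irreducible_rep (G \<times>\<times> H) n \<rho>"
    and Th: "\<Theta> = (\<lambda>p. if p \<in> carrier (G \<times>\<times> H) then mat_trace (\<rho> p) else 0)"
    using irr unfolding irr_char_def by blast
  have rrep: "is_rep (G \<times>\<times> H) n \<rho>" and npos: "n > 0" using irrr by (auto simp: irreducible_rep_def)
  have Arep: "is_rep G n (\<lambda>g. \<rho> (g, \<one>\<^bsub>H\<^esub>))"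
    unfolding is_rep_def
  proof (intro conjI ballI)
    show "\<rho> (g, \<one>\<^bsub>H\<^esub>) \<in> carrier_mat n n" if "g \<in> carrier G" for g
      using rrep that unfolding is_rep_def by simp
    show "\<rho> (\<one>\<^bsub>G\<^esub>, \<one>\<^bsub>H\<^esub>) = 1\<^sub>m n" using rrep unfolding is_rep_def by simp
    fix x y assume "x \<in> carrier G" "y \<in> carrier G"
    then show "\<rho> (x \<otimes>\<^bsub>G\<^esub> y, \<one>\<^bsub>H\<^esub>) = \<rho> (x, \<one>\<^bsub>H\<^esub>) * \<rho> (y, \<one>\<^bsub>H\<^esub>)"
      using rrep unfolding is_rep_def
      by (metis H.one_closed H.r_one SigmaI carrier_DirProd mult_DirProd)
  qed
  obtain d \<sigma> P where sirr: "irreducible_rep G d \<sigma>" and P: "P \<in> carrier_mat n d" and Pinj: "injm P"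
    and Pint: "\<forall>g\<in>carrier G. \<rho> (g, \<one>\<^bsub>H\<^esub>) * P = P * \<sigma> g"
    using G.sub_irr[OF Arep npos] by blast
  interpret PR G H n \<rho> d \<sigma> P
    by unfold_locales (use fG fH irrr sirr P Pinj Pint in auto)
  define \<chi> where "\<chi> = (\<lambda>g. if g \<in> carrier G then mat_trace (\<sigma> g) else 0)"
  define \<psi> where "\<psi> = (\<lambda>h. if h \<in> carrier H then mat_trace (tau h) else 0)"
  have "irr_char G \<chi>" unfolding irr_char_def \<chi>_def using sirr by blast
  moreover have "irr_char H \<psi>" unfolding irr_char_def \<psi>_def using tau_irr by blast
  moreover have "\<Theta> (g,h) = \<chi> g * \<psi> h" if g: "g \<in> carrier G" and h: "h \<in> carrier H" for g h
    using trace_formula[OF g h] trace_tau[OF h] chi_trace[OF g] g h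
    by (simp add: Th \<chi>_def \<psi>_def)
  ultimately show ?thesis by blast
qed


lemma (in group) irr_class:
  assumes "irr_char G \<chi>" "x \<in> carrier G" "g \<in> carrier G"
  shows "\<chi> (x \<otimes> g \<otimes> inv x) = \<chi> g"
proof -
  obtain n \<rho> where irr: "irreducible_rep G n \<rho>"
    and ch: "\<chi> = (\<lambda>g. if g \<in> carrier G then mat_trace (\<rho> g) else 0)"
    using assms(1) unfolding irr_char_def by blast
  have rep: "is_rep G n \<rho>" using irr by (simp add: irreducible_rep_def)
  have c: "\<And>g. g \<in> carrier G \<Longrightarrow> \<rho> g \<in> carrier_mat n n" using rep by (simp add: is_rep_def)
  have "\<rho> (x \<otimes> g \<otimes> inv x) = \<rho> x * \<rho> g * \<rho> (inv x)"
    using rep assms(2,3) unfolding is_rep_def by simp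
  then have "mat_trace (\<rho> (x \<otimes> g \<otimes> inv x)) = mat_trace ((\<rho> x * \<rho> g) * \<rho> (inv x))" by simp
  also have "\<dots> = mat_trace (\<rho> (inv x) * (\<rho> x * \<rho> g))"
    by (rule mat_trace_comm[of _ n n]) (use c assms mult_carrier_mat[OF c c] in auto)
  also have "\<dots> = mat_trace ((\<rho> (inv x) * \<rho> x) * \<rho> g)"
    using c assms by (simp add: assoc_mult_mat[of _ n n _ n _ n])
  also have "\<dots> = mat_trace (\<rho> g)" using rep_inv_mult[OF rep assms(2)] c[OF assms(3)] by simp
  finally show ?thesis using assms by (simp add: ch)
qed

lemma (in group) frobenius:
  assumes fin: "finite (carrier G)" and H: "subgroup H G"
    and cl: "\<And>x g. x \<in> carrier G \<Longrightarrow> g \<in> carrier G \<Longrightarrow> \<beta> (x \<otimes> g \<otimes> inv x) = \<beta> g"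
  shows "char_inner G (induced G H \<phi>) \<beta> = (\<Sum>h\<in>H. \<phi> h * cnj (\<beta> h)) / of_nat (card H)"
proof -
  have Hs: "H \<subseteq> carrier G" using H subgroup.subset by blast
  have cG: "card (carrier G) > 0" using fin card_gt_0_iff by blast
  have "(\<Sum>g\<in>carrier G. induced G H \<phi> g * cnj (\<beta> g)) =
      (\<Sum>g\<in>carrier G. \<Sum>x\<in>carrier G. (if x \<otimes> g \<otimes> inv x \<in> H then \<phi> (x \<otimes> g \<otimes> inv x) else 0) * cnj (\<beta> (x \<otimes> g \<otimes> inv x))) / of_nat (card H)"
    by (simp add: induced_def sum_divide_distrib sum_distrib_right cl)
  also have "(\<Sum>g\<in>carrier G. \<Sum>x\<in>carrier G. (if x \<otimes> g \<otimes> inv x \<in> H then \<phi> (x \<otimes> g \<otimes> inv x) else 0) * cnj (\<beta> (x \<otimes> g \<otimes> inv x))) =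
      (\<Sum>x\<in>carrier G. \<Sum>k\<in>carrier G. (if k \<in> H then \<phi> k else 0) * cnj (\<beta> k))"
    by (subst sum.swap) (intro sum.cong refl sum_conj[of _ "\<lambda>k. (if k \<in> H then \<phi> k else 0) * cnj (\<beta> k)"], simp)
  also have "\<dots> = of_nat (card (carrier G)) * (\<Sum>h\<in>H. \<phi> h * cnj (\<beta> h))"
    using Hs fin by (simp add: if_distrib[of "\<lambda>t. t * _"] sum.If_cases Int_absorb1 cong: if_cong)
  finally show ?thesis using cG unfolding char_inner_def by simp
qed

lemma irr_zero: "irr_char G \<chi> \<Longrightarrow> g \<notin> carrier G \<Longrightarrow> \<chi> g = 0"
  unfolding irr_char_def by auto

lemma irr_one: assumes "irr_char G \<chi>" "group G" shows "\<chi> \<one>\<^bsub>G\<^esub> \<noteq> 0"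
proof -
  obtain n \<rho> where irr: "irreducible_rep G n \<rho>"
    and ch: "\<chi> = (\<lambda>g. if g \<in> carrier G then mat_trace (\<rho> g) else 0)"
    using assms(1) unfolding irr_char_def by blast
  have "\<chi> \<one>\<^bsub>G\<^esub> = of_nat n" using irr assms(2)
    by (simp add: ch irreducible_rep_def is_rep_def group.is_monoid monoid.one_closed)
  then show ?thesis using irr by (simp add: irreducible_rep_def)
qed

lemma irr_prod_eq:
  assumes "irr_char (G \<times>\<times> H) \<Theta>1" "irr_char (G \<times>\<times> H) \<Theta>2"
    and "\<forall>g\<in>carrier G. \<forall>h\<in>carrier H. \<Theta>1 (g,h) = \<Theta>2 (g,h)"
  shows "\<Theta>1 = \<Theta>2"
proof
  fix p
  show "\<Theta>1 p = \<Theta>2 p"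
  proof (cases "fst p \<in> carrier G \<and> snd p \<in> carrier H")
    case True then show ?thesis using assms(3) by (cases p) simp
  next
    case False then show ?thesis using irr_zero[OF assms(1), of p] irr_zero[OF assms(2), of p] by (cases p) simp
  qed
qed

lemma subgroup_fst:
  assumes G: "group G" and H: "group H" and K: "subgroup K (G \<times>\<times> H)"
  shows "subgroup (fst ` K) G"
proof -
  interpret G: group G by fact
  interpret H: group H by fact
  have Ks: "K \<subseteq> carrier G \<times> carrier H" using subgroup.subset[OF K] by simp
  show ?thesis
  proof (rule G.subgroupI)
    show "fst ` K \<subseteq> carrier G" using Ks by auto
    show "fst ` K \<noteq> {}" using subgroup.one_closed[OF K] by auto
  next
    fix a assume "a \<in> fst ` K"
    then obtain b where ab: "(a,b) \<in> K" by auto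
    then have ab': "a \<in> carrier G" "b \<in> carrier H" using Ks by auto
    have "inv\<^bsub>G \<times>\<times> H\<^esub> (a,b) \<in> K" using subgroup.m_inv_closed[OF K ab] .
    then have "(inv\<^bsub>G\<^esub> a, inv\<^bsub>H\<^esub> b) \<in> K" using inv_DirProd[OF G H ab'] by simp
    then show "inv\<^bsub>G\<^esub> a \<in> fst ` K" by force
  next
    fix a b assume "a \<in> fst ` K" "b \<in> fst ` K"
    then obtain a' b' where "(a,a') \<in> K" "(b,b') \<in> K" by auto
    then have "(a,a') \<otimes>\<^bsub>G \<times>\<times> H\<^esub> (b,b') \<in> K" using subgroup.m_closed[OF K] by blast
    then show "a \<otimes>\<^bsub>G\<^esub> b \<in> fst ` K" by force
  qed
qed

lemma sum_prod_single: "(\<Sum>k\<in>A \<times> {b}. f k) = (\<Sum>a\<in>A. f (a,b))"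
  by (rule sum.reindex_bij_witness[of _ "\<lambda>a. (a,b)" fst]) auto

lemma sum_single_prod: "(\<Sum>k\<in>{a} \<times> B. f k) = (\<Sum>b\<in>B. f (a,b))"
  by (rule sum.reindex_bij_witness[of _ "\<lambda>b. (a,b)" snd]) auto

lemma dir_prod_am:
  assumes G: "group G" and H: "group H" and fG: "finite (carrier G)" and fH: "finite (carrier H)"
    and amG: "almost_monomial G" and amH: "almost_monomial H"
  shows "almost_monomial (G \<times>\<times> H)"
  unfolding almost_monomial_def
proof (intro allI impI)
  interpret G: group G by fact
  interpret H: group H by fact
  interpret GH: group "G \<times>\<times> H" by (rule DirProd_group[OF G H])
  have fGH: "finite (carrier (G \<times>\<times> H))" using fG fH by simp
  fix \<Theta>1 \<Theta>2 assume a: "irr_char (G \<times>\<times> H) \<Theta>1 \<and> irr_char (G \<times>\<times> H) \<Theta>2 \<and> \<Theta>1 \<noteq> \<Theta>2"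
  then have i1: "irr_char (G \<times>\<times> H) \<Theta>1" and i2: "irr_char (G \<times>\<times> H) \<Theta>2" and ne: "\<Theta>1 \<noteq> \<Theta>2" by auto
  obtain \<chi>1 \<psi>1 where c1: "irr_char G \<chi>1" "irr_char H \<psi>1" "\<forall>g\<in>carrier G. \<forall>h\<in>carrier H. \<Theta>1 (g,h) = \<chi>1 g * \<psi>1 h"
    using prod_decomp[OF G H fG fH i1] by blast
  obtain \<chi>2 \<psi>2 where c2: "irr_char G \<chi>2" "irr_char H \<psi>2" "\<forall>g\<in>carrier G. \<forall>h\<in>carrier H. \<Theta>2 (g,h) = \<chi>2 g * \<psi>2 h"
    using prod_decomp[OF G H fG fH i2] by blast
  have cl1: "\<And>x g. x \<in> carrier (G \<times>\<times> H) \<Longrightarrow> g \<in> carrier (G \<times>\<times> H) \<Longrightarrow> \<Theta>1 (x \<otimes>\<^bsub>G \<times>\<times> H\<^esub> g \<otimes>\<^bsub>G \<times>\<times> H\<^esub> inv\<^bsub>G \<times>\<times> H\<^esub> x) = \<Theta>1 g"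
    using GH.irr_class[OF i1] by blast
  have cl2: "\<And>x g. x \<in> carrier (G \<times>\<times> H) \<Longrightarrow> g \<in> carrier (G \<times>\<times> H) \<Longrightarrow> \<Theta>2 (x \<otimes>\<^bsub>G \<times>\<times> H\<^esub> g \<otimes>\<^bsub>G \<times>\<times> H\<^esub> inv\<^bsub>G \<times>\<times> H\<^esub> x) = \<Theta>2 g"
    using GH.irr_class[OF i2] by blast
  show "\<exists>K lam. subgroup K (G \<times>\<times> H) \<and> linear_char (G \<times>\<times> H) K lam \<and>
           char_inner (G \<times>\<times> H) (induced (G \<times>\<times> H) K lam) \<Theta>1 \<noteq> 0 \<and>
           char_inner (G \<times>\<times> H) (induced (G \<times>\<times> H) K lam) \<Theta>2 = 0"
  proof (cases "\<chi>1 = \<chi>2")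
    case False
    then obtain S \<phi> where S: "subgroup S G" and lc: "linear_char G S \<phi>"
      and n1: "char_inner G (induced G S \<phi>) \<chi>1 \<noteq> 0" and n2: "char_inner G (induced G S \<phi>) \<chi>2 = 0"
      using amG c1(1) c2(1) unfolding almost_monomial_def by blast
    have Ss: "S \<subseteq> carrier G" using subgroup.subset[OF S] .
    have fS: "finite S" using fG Ss finite_subset by blast
    define K where "K = S \<times> {\<one>\<^bsub>H\<^esub>}"
    have K: "subgroup K (G \<times>\<times> H)" unfolding K_def by (rule DirProd_subgroups[OF G S H H.triv_subgroup])
    have lK: "linear_char (G \<times>\<times> H) K (\<lambda>p. \<phi> (fst p))" using lc unfolding linear_char_def K_def by auto
    have cK: "card K = card S" unfolding K_def by (simp add: card_cartesian_product)
    have fr: "char_inner (G \<times>\<times> H) (induced (G \<times>\<times> H) K (\<lambda>p. \<phi> (fst p))) \<Theta> =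
        cnj (\<psi> \<one>\<^bsub>H\<^esub>) * char_inner G (induced G S \<phi>) \<chi>"
      if cl: "\<And>x g. x \<in> carrier (G \<times>\<times> H) \<Longrightarrow> g \<in> carrier (G \<times>\<times> H) \<Longrightarrow> \<Theta> (x \<otimes>\<^bsub>G \<times>\<times> H\<^esub> g \<otimes>\<^bsub>G \<times>\<times> H\<^esub> inv\<^bsub>G \<times>\<times> H\<^esub> x) = \<Theta> g"
        and ch: "irr_char G \<chi>" and fa: "\<forall>g\<in>carrier G. \<forall>h\<in>carrier H. \<Theta> (g,h) = \<chi> g * \<psi> h" for \<Theta> \<chi> \<psi>
    proof -
      have "char_inner (G \<times>\<times> H) (induced (G \<times>\<times> H) K (\<lambda>p. \<phi> (fst p))) \<Theta> = (\<Sum>k\<in>K. \<phi> (fst k) * cnj (\<Theta> k)) / of_nat (card K)"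
        by (rule GH.frobenius[OF fGH K cl])
      also have "(\<Sum>k\<in>K. \<phi> (fst k) * cnj (\<Theta> k)) = (\<Sum>a\<in>S. \<phi> a * cnj (\<chi> a * \<psi> \<one>\<^bsub>H\<^esub>))"
        unfolding K_def sum_prod_single using Ss fa by (intro sum.cong refl) auto
      also have "\<dots> = cnj (\<psi> \<one>\<^bsub>H\<^esub>) * (\<Sum>a\<in>S. \<phi> a * cnj (\<chi> a))"
        by (simp add: sum_distrib_left mult_ac)
      finally show ?thesis using G.frobenius[OF fG S G.irr_class[OF ch]] cK by simp
    qed
    show ?thesis
    proof (intro exI conjI)
      show "subgroup K (G \<times>\<times> H)" by fact
      show "linear_char (G \<times>\<times> H) K (\<lambda>p. \<phi> (fst p))" by fact
      show "char_inner (G \<times>\<times> H) (induced (G \<times>\<times> H) K (\<lambda>p. \<phi> (fst p))) \<Theta>1 \<noteq> 0"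
        using fr[OF cl1 c1(1) c1(3)] n1 irr_one[OF c1(2) H] by simp
      show "char_inner (G \<times>\<times> H) (induced (G \<times>\<times> H) K (\<lambda>p. \<phi> (fst p))) \<Theta>2 = 0"
        using fr[OF cl2 c2(1) c2(3)] n2 by simp
    qed
  next
    case True
    have "\<psi>1 \<noteq> \<psi>2"
    proof
      assume "\<psi>1 = \<psi>2"
      then have "\<Theta>1 = \<Theta>2" using True c1 c2 by (intro irr_prod_eq[OF i1 i2]) auto
      then show False using ne by simp
    qed
    then obtain S \<phi> where S: "subgroup S H" and lc: "linear_char H S \<phi>"
      and n1: "char_inner H (induced H S \<phi>) \<psi>1 \<noteq> 0" and n2: "char_inner H (induced H S \<phi>) \<psi>2 = 0"
      using amH c1(2) c2(2) unfolding almost_monomial_def by blast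
    have Ss: "S \<subseteq> carrier H" using subgroup.subset[OF S] .
    define K where "K = {\<one>\<^bsub>G\<^esub>} \<times> S"
    have K: "subgroup K (G \<times>\<times> H)" unfolding K_def by (rule DirProd_subgroups[OF G G.triv_subgroup H S])
    have lK: "linear_char (G \<times>\<times> H) K (\<lambda>p. \<phi> (snd p))" using lc unfolding linear_char_def K_def by auto
    have cK: "card K = card S" unfolding K_def by (simp add: card_cartesian_product)
    have fr: "char_inner (G \<times>\<times> H) (induced (G \<times>\<times> H) K (\<lambda>p. \<phi> (snd p))) \<Theta> =
        cnj (\<chi> \<one>\<^bsub>G\<^esub>) * char_inner H (induced H S \<phi>) \<psi>"
      if cl: "\<And>x g. x \<in> carrier (G \<times>\<times> H) \<Longrightarrow> g \<in> carrier (G \<times>\<times> H) \<Longrightarrow> \<Theta> (x \<otimes>\<^bsub>G \<times>\<times> H\<^esub> g \<otimes>\<^bsub>G \<times>\<times> H\<^esub> inv\<^bsub>G \<times>\<times> H\<^esub> x) = \<Theta> g"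
        and ch: "irr_char H \<psi>" and fa: "\<forall>g\<in>carrier G. \<forall>h\<in>carrier H. \<Theta> (g,h) = \<chi> g * \<psi> h" for \<Theta> \<chi> \<psi>
    proof -
      have "char_inner (G \<times>\<times> H) (induced (G \<times>\<times> H) K (\<lambda>p. \<phi> (snd p))) \<Theta> = (\<Sum>k\<in>K. \<phi> (snd k) * cnj (\<Theta> k)) / of_nat (card K)"
        by (rule GH.frobenius[OF fGH K cl])
      also have "(\<Sum>k\<in>K. \<phi> (snd k) * cnj (\<Theta> k)) = (\<Sum>b\<in>S. \<phi> b * cnj (\<chi> \<one>\<^bsub>G\<^esub> * \<psi> b))"
        unfolding K_def sum_single_prod using Ss fa by (intro sum.cong refl) auto
      also have "\<dots> = cnj (\<chi> \<one>\<^bsub>G\<^esub>) * (\<Sum>b\<in>S. \<phi> b * cnj (\<psi> b))"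
        by (simp add: sum_distrib_left mult_ac)
      finally show ?thesis using H.frobenius[OF fH S H.irr_class[OF ch]] cK by simp
    qed
    show ?thesis
    proof (intro exI conjI)
      show "subgroup K (G \<times>\<times> H)" by fact
      show "linear_char (G \<times>\<times> H) K (\<lambda>p. \<phi> (snd p))" by fact
      show "char_inner (G \<times>\<times> H) (induced (G \<times>\<times> H) K (\<lambda>p. \<phi> (snd p))) \<Theta>1 \<noteq> 0"
        using fr[OF cl1 c1(2) c1(3)] n1 irr_one[OF c1(1) G] by simp
      show "char_inner (G \<times>\<times> H) (induced (G \<times>\<times> H) K (\<lambda>p. \<phi> (snd p))) \<Theta>2 = 0"
        using fr[OF cl2 c2(2) c2(3)] n2 by simp
    qed
  qed
qed


lemma (in group) sum_subgroup_lmult: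
  assumes K: "subgroup K G" and a: "a \<in> K"
  shows "(\<Sum>k\<in>K. f (a \<otimes> k)) = (\<Sum>k\<in>K. f k)"
proof -
  have Ks: "K \<subseteq> carrier G" using subgroup.subset[OF K] .
  have ac: "a \<in> carrier G" using a Ks by auto
  have "bij_betw (\<lambda>k. a \<otimes> k) K K"
  proof (rule bij_betwI[where g="\<lambda>k. inv a \<otimes> k"])
    show "(\<lambda>k. a \<otimes> k) \<in> K \<rightarrow> K" using subgroup.m_closed[OF K a] by auto
    show "(\<lambda>k. inv a \<otimes> k) \<in> K \<rightarrow> K" using subgroup.m_closed[OF K subgroup.m_inv_closed[OF K a]] by auto
    fix x assume "x \<in> K" then have x: "x \<in> carrier G" using Ks by auto
    show "inv a \<otimes> (a \<otimes> x) = x" using cancel_l2[OF ac x] .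
    show "a \<otimes> (inv a \<otimes> x) = x" using cancel_l1[OF ac x] .
  qed
  then show ?thesis using sum.reindex_bij_betw by blast
qed

lemma irr_lift_fst:
  assumes G: "group G" and H: "group H" and irr: "irr_char G \<chi>"
  shows "irr_char (G \<times>\<times> H) (\<lambda>p. if p \<in> carrier (G \<times>\<times> H) then \<chi> (fst p) else 0)"
proof -
  interpret G: group G by fact
  interpret H: group H by fact
  obtain n \<rho> where ir: "irreducible_rep G n \<rho>"
    and ch: "\<chi> = (\<lambda>g. if g \<in> carrier G then mat_trace (\<rho> g) else 0)"
    using irr unfolding irr_char_def by blast
  have rep: "is_rep G n \<rho>" and n: "n > 0"
    and irW: "\<And>W. invariant_subspace G n \<rho> W \<Longrightarrow> W = {0\<^sub>v n} \<or> W = carrier_vec n"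
    using ir unfolding irreducible_rep_def by auto
  have rep2: "is_rep (G \<times>\<times> H) n (\<lambda>p. \<rho> (fst p))"
    using rep unfolding is_rep_def by (auto simp: mult_DirProd')
  have "irreducible_rep (G \<times>\<times> H) n (\<lambda>p. \<rho> (fst p))"
    unfolding irreducible_rep_def
  proof (intro conjI n rep2 allI impI)
    fix W assume W: "invariant_subspace (G \<times>\<times> H) n (\<lambda>p. \<rho> (fst p)) W"
    have "invariant_subspace G n \<rho> W"
      unfolding invariant_subspace_def
    proof (intro conjI ballI allI)
      fix g v assume g: "g \<in> carrier G" and v: "v \<in> W"
      have "(g, \<one>\<^bsub>H\<^esub>) \<in> carrier (G \<times>\<times> H)" using g by simp
      then show "\<rho> g *\<^sub>v v \<in> W" using W v unfolding invariant_subspace_def by fastforce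
    qed (use W in \<open>auto simp: invariant_subspace_def\<close>)
    then show "W = {0\<^sub>v n} \<or> W = carrier_vec n" by (rule irW)
  qed
  moreover have "(\<lambda>p. if p \<in> carrier (G \<times>\<times> H) then \<chi> (fst p) else 0) =
      (\<lambda>p. if p \<in> carrier (G \<times>\<times> H) then mat_trace (\<rho> (fst p)) else 0)"
    by (auto simp: ch)
  ultimately show ?thesis unfolding irr_char_def by blast
qed

lemma reduce_fst:
  assumes G: "group G" and H: "group H" and fG: "finite (carrier G)" and fH: "finite (carrier H)"
    and K: "subgroup K (G \<times>\<times> H)" and lc: "linear_char (G \<times>\<times> H) K lam"
    and nz: "(\<Sum>k\<in>K. lam k * cnj (\<chi> (fst k))) \<noteq> 0"
  shows "\<exists>\<mu> c. linear_char G (fst ` K) \<mu> \<and> c \<noteq> (0::complex) \<and>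
     (\<forall>\<alpha>. (\<Sum>k\<in>K. lam k * cnj (\<alpha> (fst k))) = c * (\<Sum>h\<in>fst ` K. \<mu> h * cnj (\<alpha> h)))"
proof -
  interpret G: group G by fact
  interpret H: group H by fact
  interpret GH: group "G \<times>\<times> H" by (rule DirProd_group[OF G H])
  have Ks: "K \<subseteq> carrier G \<times> carrier H" using subgroup.subset[OF K] by simp
  have fK: "finite K" using Ks fG fH finite_subset by blast
  have lnz: "\<And>k. k \<in> K \<Longrightarrow> lam k \<noteq> 0" and lm: "\<And>x y. x \<in> K \<Longrightarrow> y \<in> K \<Longrightarrow> lam (x \<otimes>\<^bsub>G \<times>\<times> H\<^esub> y) = lam x * lam y"
    using lc unfolding linear_char_def by auto
  have triv: "lam (\<one>\<^bsub>G\<^esub>, b) = 1" if b: "(\<one>\<^bsub>G\<^esub>, b) \<in> K" for b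
  proof (rule ccontr)
    assume ne: "lam (\<one>\<^bsub>G\<^esub>, b) \<noteq> 1"
    define f where "f k = lam k * cnj (\<chi> (fst k))" for k
    have "(\<Sum>k\<in>K. f k) = (\<Sum>k\<in>K. f ((\<one>\<^bsub>G\<^esub>, b) \<otimes>\<^bsub>G \<times>\<times> H\<^esub> k))"
      using GH.sum_subgroup_lmult[OF K b, of f] by simp
    also have "\<dots> = (\<Sum>k\<in>K. lam (\<one>\<^bsub>G\<^esub>, b) * f k)"
    proof (rule sum.cong[OF refl])
      fix k assume k: "k \<in> K"
      then have "fst k \<in> carrier G" using Ks by auto
      then show "f ((\<one>\<^bsub>G\<^esub>, b) \<otimes>\<^bsub>G \<times>\<times> H\<^esub> k) = lam (\<one>\<^bsub>G\<^esub>, b) * f k"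
        unfolding f_def using lm[OF b k] by (simp add: mult_DirProd')
    qed
    also have "\<dots> = lam (\<one>\<^bsub>G\<^esub>, b) * (\<Sum>k\<in>K. f k)" by (simp add: sum_distrib_left)
    finally have "(1 - lam (\<one>\<^bsub>G\<^esub>, b)) * (\<Sum>k\<in>K. f k) = 0" by (simp add: algebra_simps)
    then show False using ne nz unfolding f_def by simp
  qed
  have wd: "lam (h,a) = lam (h,b)" if ha: "(h,a) \<in> K" and hb: "(h,b) \<in> K" for h a b
  proof -
    have hc: "h \<in> carrier G" "a \<in> carrier H" "b \<in> carrier H" using ha hb Ks by auto
    define x where "x = (h,a) \<otimes>\<^bsub>G \<times>\<times> H\<^esub> inv\<^bsub>G \<times>\<times> H\<^esub> (h,b)"
    have xK: "x \<in> K" unfolding x_def using subgroup.m_closed[OF K ha subgroup.m_inv_closed[OF K hb]] .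
    have "x = (\<one>\<^bsub>G\<^esub>, a \<otimes>\<^bsub>H\<^esub> inv\<^bsub>H\<^esub> b)" unfolding x_def using hc by (simp add: inv_DirProd[OF G H])
    then have lx: "lam x = 1" using triv xK by simp
    have "(h,a) = x \<otimes>\<^bsub>G \<times>\<times> H\<^esub> (h,b)"
      unfolding x_def using GH.cancel_r1[of "(h,b)" "(h,a)"] hc by simp
    then have "lam (h,a) = lam x * lam (h,b)" using lm[OF xK hb] by simp
    then show ?thesis using lx by simp
  qed
  define \<mu> where "\<mu> h = lam (h, SOME b. (h,b) \<in> K)" for h
  have lmu: "lam k = \<mu> (fst k)" if k: "k \<in> K" for k
  proof -
    obtain h a where ka: "k = (h,a)" by (cases k)
    have s: "(h, SOME b. (h,b) \<in> K) \<in> K" using someI[of "\<lambda>b. (h,b) \<in> K" a] k ka by simp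
    have "lam (h,a) = lam (h, SOME b. (h,b) \<in> K)" using wd[OF _ s, of a] k ka by simp
    then show ?thesis unfolding \<mu>_def using ka by simp
  qed
  have linmu: "linear_char G (fst ` K) \<mu>"
    unfolding linear_char_def
  proof (intro conjI ballI)
    fix h assume "h \<in> fst ` K"
    then obtain k where kk: "k \<in> K" "h = fst k" by auto
    then show "\<mu> h \<noteq> 0" using lmu[OF kk(1)] lnz[OF kk(1)] by simp
  next
    fix x y assume "x \<in> fst ` K" "y \<in> fst ` K"
    then obtain a b where ab: "a \<in> K" "b \<in> K" "x = fst a" "y = fst b" by auto
    have abK: "a \<otimes>\<^bsub>G \<times>\<times> H\<^esub> b \<in> K" using subgroup.m_closed[OF K ab(1,2)] .
    have "fst (a \<otimes>\<^bsub>G \<times>\<times> H\<^esub> b) = x \<otimes>\<^bsub>G\<^esub> y" using ab by (simp add: mult_DirProd')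
    then show "\<mu> (x \<otimes>\<^bsub>G\<^esub> y) = \<mu> x * \<mu> y"
      using lmu[OF abK] lmu[OF ab(1)] lmu[OF ab(2)] lm[OF ab(1,2)] ab by simp
  qed
  define F where "F h = {k \<in> K. fst k = h}" for h
  have cardF: "card (F h) = card (F \<one>\<^bsub>G\<^esub>)" if h: "h \<in> fst ` K" for h
  proof -
    obtain a where a: "a \<in> K" "fst a = h" using h by auto
    have ac: "a \<in> carrier (G \<times>\<times> H)" using a Ks by auto
    have "F h = (\<lambda>k. a \<otimes>\<^bsub>G \<times>\<times> H\<^esub> k) ` F \<one>\<^bsub>G\<^esub>"
    proof
      show "(\<lambda>k. a \<otimes>\<^bsub>G \<times>\<times> H\<^esub> k) ` F \<one>\<^bsub>G\<^esub> \<subseteq> F h"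
      proof
        fix y assume "y \<in> (\<lambda>k. a \<otimes>\<^bsub>G \<times>\<times> H\<^esub> k) ` F \<one>\<^bsub>G\<^esub>"
        then obtain k where k: "k \<in> K" "fst k = \<one>\<^bsub>G\<^esub>" "y = a \<otimes>\<^bsub>G \<times>\<times> H\<^esub> k" unfolding F_def by auto
        have "y \<in> K" using subgroup.m_closed[OF K a(1) k(1)] k by simp
        moreover have "fst y = h" using k a Ks by (auto simp: mult_DirProd')
        ultimately show "y \<in> F h" unfolding F_def by simp
      qed
      show "F h \<subseteq> (\<lambda>k. a \<otimes>\<^bsub>G \<times>\<times> H\<^esub> k) ` F \<one>\<^bsub>G\<^esub>"
      proof
        fix y assume "y \<in> F h"
        then have y: "y \<in> K" "fst y = h" unfolding F_def by auto
        have yc: "y \<in> carrier (G \<times>\<times> H)" using y Ks by auto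
        define k where "k = inv\<^bsub>G \<times>\<times> H\<^esub> a \<otimes>\<^bsub>G \<times>\<times> H\<^esub> y"
        have kK: "k \<in> K" unfolding k_def using subgroup.m_closed[OF K subgroup.m_inv_closed[OF K a(1)] y(1)] .
        have "fst k = \<one>\<^bsub>G\<^esub>"
        proof -
          obtain a1 a2 where aa: "a = (a1,a2)" by (cases a)
          obtain y1 y2 where yy: "y = (y1,y2)" by (cases y)
          show ?thesis using aa yy a y ac yc unfolding k_def by (simp add: inv_DirProd[OF G H])
        qed
        moreover have "y = a \<otimes>\<^bsub>G \<times>\<times> H\<^esub> k" unfolding k_def using GH.cancel_l1[OF ac yc] by simp
        ultimately show "y \<in> (\<lambda>k. a \<otimes>\<^bsub>G \<times>\<times> H\<^esub> k) ` F \<one>\<^bsub>G\<^esub>" unfolding F_def using kK by auto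
      qed
    qed
    moreover have "inj_on (\<lambda>k. a \<otimes>\<^bsub>G \<times>\<times> H\<^esub> k) (F \<one>\<^bsub>G\<^esub>)"
    proof (rule inj_onI)
      fix x y assume "x \<in> F \<one>\<^bsub>G\<^esub>" "y \<in> F \<one>\<^bsub>G\<^esub>" and eq: "a \<otimes>\<^bsub>G \<times>\<times> H\<^esub> x = a \<otimes>\<^bsub>G \<times>\<times> H\<^esub> y"
      then have "x \<in> carrier (G \<times>\<times> H)" "y \<in> carrier (G \<times>\<times> H)" unfolding F_def using Ks by auto
      then show "x = y" using GH.l_cancel[OF eq _ _ ac] by blast
    qed
    ultimately show ?thesis by (simp add: card_image)
  qed
  define c where "c = card (F \<one>\<^bsub>G\<^esub>)"
  have "(\<one>\<^bsub>G\<^esub>, \<one>\<^bsub>H\<^esub>) \<in> F \<one>\<^bsub>G\<^esub>" unfolding F_def using subgroup.one_closed[OF K] by simp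
  moreover have "finite (F \<one>\<^bsub>G\<^esub>)" unfolding F_def using fK by simp
  ultimately have c0: "c > 0" unfolding c_def using card_gt_0_iff by blast
  have "(\<Sum>k\<in>K. lam k * cnj (\<alpha> (fst k))) = of_nat c * (\<Sum>h\<in>fst ` K. \<mu> h * cnj (\<alpha> h))" for \<alpha>
  proof -
    have "(\<Sum>k\<in>K. lam k * cnj (\<alpha> (fst k))) = (\<Sum>h\<in>fst ` K. \<Sum>k\<in>F h. lam k * cnj (\<alpha> (fst k)))"
      unfolding F_def by (rule sum.image_gen[OF fK])
    also have "\<dots> = (\<Sum>h\<in>fst ` K. \<Sum>k\<in>F h. \<mu> h * cnj (\<alpha> h))"
      by (intro sum.cong refl) (auto simp: F_def lmu)
    also have "\<dots> = (\<Sum>h\<in>fst ` K. of_nat c * (\<mu> h * cnj (\<alpha> h)))"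
      by (intro sum.cong refl) (simp add: cardF c_def)
    finally show ?thesis by (simp add: sum_distrib_left)
  qed
  with linmu c0 show ?thesis by (intro exI[of _ \<mu>] exI[of _ "of_nat c"]) auto
qed


lemma am_fst:
  assumes G: "group G" and H: "group H" and fG: "finite (carrier G)" and fH: "finite (carrier H)"
    and am: "almost_monomial (G \<times>\<times> H)"
  shows "almost_monomial G"
  unfolding almost_monomial_def
proof (intro allI impI)
  interpret G: group G by fact
  interpret H: group H by fact
  interpret GH: group "G \<times>\<times> H" by (rule DirProd_group[OF G H])
  have fGH: "finite (carrier (G \<times>\<times> H))" using fG fH by simp
  fix \<chi> \<psi> assume a: "irr_char G \<chi> \<and> irr_char G \<psi> \<and> \<chi> \<noteq> \<psi>"
  then have i1: "irr_char G \<chi>" and i2: "irr_char G \<psi>" and ne: "\<chi> \<noteq> \<psi>" by auto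
  define lift where "lift \<alpha> = (\<lambda>p. if p \<in> carrier (G \<times>\<times> H) then \<alpha> (fst p) else (0::complex))" for \<alpha>
  have l1: "irr_char (G \<times>\<times> H) (lift \<chi>)" unfolding lift_def by (rule irr_lift_fst[OF G H i1])
  have l2: "irr_char (G \<times>\<times> H) (lift \<psi>)" unfolding lift_def by (rule irr_lift_fst[OF G H i2])
  have lne: "lift \<chi> \<noteq> lift \<psi>"
  proof
    assume eq: "lift \<chi> = lift \<psi>"
    obtain g where g: "\<chi> g \<noteq> \<psi> g" using ne by auto
    then have gc: "g \<in> carrier G" using irr_zero[OF i1] irr_zero[OF i2] by force
    have "lift \<chi> (g, \<one>\<^bsub>H\<^esub>) = \<chi> g" "lift \<psi> (g, \<one>\<^bsub>H\<^esub>) = \<psi> g" using gc by (simp_all add: lift_def)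
    then show False using eq g by simp
  qed
  obtain K lam where K: "subgroup K (G \<times>\<times> H)" and lc: "linear_char (G \<times>\<times> H) K lam"
    and n1: "char_inner (G \<times>\<times> H) (induced (G \<times>\<times> H) K lam) (lift \<chi>) \<noteq> 0"
    and n2: "char_inner (G \<times>\<times> H) (induced (G \<times>\<times> H) K lam) (lift \<psi>) = 0"
    using am l1 l2 lne unfolding almost_monomial_def by blast
  have Ks: "K \<subseteq> carrier G \<times> carrier H" using subgroup.subset[OF K] by simp
  have fr: "char_inner (G \<times>\<times> H) (induced (G \<times>\<times> H) K lam) (lift \<alpha>) =
      (\<Sum>k\<in>K. lam k * cnj (\<alpha> (fst k))) / of_nat (card K)" if ia: "irr_char (G \<times>\<times> H) (lift \<alpha>)" for \<alpha>
  proof -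
    have "char_inner (G \<times>\<times> H) (induced (G \<times>\<times> H) K lam) (lift \<alpha>) =
      (\<Sum>k\<in>K. lam k * cnj (lift \<alpha> k)) / of_nat (card K)"
      by (rule GH.frobenius[OF fGH K GH.irr_class[OF ia]])
    also have "(\<Sum>k\<in>K. lam k * cnj (lift \<alpha> k)) = (\<Sum>k\<in>K. lam k * cnj (\<alpha> (fst k)))"
      using Ks by (intro sum.cong refl) (auto simp: lift_def)
    finally show ?thesis .
  qed
  have T1: "(\<Sum>k\<in>K. lam k * cnj (\<chi> (fst k))) \<noteq> 0" using n1 fr[OF l1] by auto
  have T2: "(\<Sum>k\<in>K. lam k * cnj (\<psi> (fst k))) = 0"
  proof -
    have "card K > 0" using subgroup.one_closed[OF K] fGH subgroup.subset[OF K] card_gt_0_iff finite_subset by blast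
    then show ?thesis using n2 fr[OF l2] by simp
  qed
  obtain \<mu> c where lmu: "linear_char G (fst ` K) \<mu>" and c: "c \<noteq> 0"
    and eqT: "\<And>\<alpha>. (\<Sum>k\<in>K. lam k * cnj (\<alpha> (fst k))) = c * (\<Sum>h\<in>fst ` K. \<mu> h * cnj (\<alpha> h))"
    using reduce_fst[OF G H fG fH K lc T1] by blast
  have S: "subgroup (fst ` K) G" by (rule subgroup_fst[OF G H K])
  have cS: "card (fst ` K) > 0" using subgroup.one_closed[OF S] subgroup.subset[OF S] fG card_gt_0_iff finite_subset by blast
  show "\<exists>S \<mu>. subgroup S G \<and> linear_char G S \<mu> \<and> char_inner G (induced G S \<mu>) \<chi> \<noteq> 0 \<and>
            char_inner G (induced G S \<mu>) \<psi> = 0"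
  proof (intro exI conjI)
    show "subgroup (fst ` K) G" by (rule S)
    show "linear_char G (fst ` K) \<mu>" by (rule lmu)
    show "char_inner G (induced G (fst ` K) \<mu>) \<chi> \<noteq> 0"
      using G.frobenius[OF fG S G.irr_class[OF i1]] T1 eqT[of \<chi>] cS by auto
    show "char_inner G (induced G (fst ` K) \<mu>) \<psi> = 0"
      using G.frobenius[OF fG S G.irr_class[OF i2]] T2 eqT[of \<psi>] c by auto
  qed
qed


lemma subgroup_snd:
  assumes G: "group G" and H: "group H" and K: "subgroup K (G \<times>\<times> H)"
  shows "subgroup (snd ` K) H"
proof -
  interpret G: group G by fact
  interpret H: group H by fact
  have Ks: "K \<subseteq> carrier G \<times> carrier H" using subgroup.subset[OF K] by simp
  show ?thesis
  proof (rule H.subgroupI)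
    show "snd ` K \<subseteq> carrier H" using Ks by auto
    show "snd ` K \<noteq> {}" using subgroup.one_closed[OF K] by auto
  next
    fix a assume "a \<in> snd ` K"
    then obtain b where ab: "(b,a) \<in> K" by auto
    then have ab': "b \<in> carrier G" "a \<in> carrier H" using Ks by auto
    have "inv\<^bsub>G \<times>\<times> H\<^esub> (b,a) \<in> K" using subgroup.m_inv_closed[OF K ab] .
    then have "(inv\<^bsub>G\<^esub> b, inv\<^bsub>H\<^esub> a) \<in> K" using inv_DirProd[OF G H ab'] by simp
    then show "inv\<^bsub>H\<^esub> a \<in> snd ` K" by force
  next
    fix a b assume "a \<in> snd ` K" "b \<in> snd ` K"
    then obtain a' b' where "(a',a) \<in> K" "(b',b) \<in> K" by auto
    then have "(a',a) \<otimes>\<^bsub>G \<times>\<times> H\<^esub> (b',b) \<in> K" using subgroup.m_closed[OF K] by blast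
    then show "a \<otimes>\<^bsub>H\<^esub> b \<in> snd ` K" by force
  qed
qed

lemma irr_lift_snd:
  assumes G: "group G" and H: "group H" and irr: "irr_char H \<chi>"
  shows "irr_char (G \<times>\<times> H) (\<lambda>p. if p \<in> carrier (G \<times>\<times> H) then \<chi> (snd p) else 0)"
proof -
  interpret G: group G by fact
  interpret H: group H by fact
  obtain n \<rho> where ir: "irreducible_rep H n \<rho>"
    and ch: "\<chi> = (\<lambda>g. if g \<in> carrier H then mat_trace (\<rho> g) else 0)"
    using irr unfolding irr_char_def by blast
  have rep: "is_rep H n \<rho>" and n: "n > 0"
    and irW: "\<And>W. invariant_subspace H n \<rho> W \<Longrightarrow> W = {0\<^sub>v n} \<or> W = carrier_vec n"
    using ir unfolding irreducible_rep_def by auto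
  have rep2: "is_rep (G \<times>\<times> H) n (\<lambda>p. \<rho> (snd p))"
    using rep unfolding is_rep_def by (auto simp: mult_DirProd')
  have "irreducible_rep (G \<times>\<times> H) n (\<lambda>p. \<rho> (snd p))"
    unfolding irreducible_rep_def
  proof (intro conjI n rep2 allI impI)
    fix W assume W: "invariant_subspace (G \<times>\<times> H) n (\<lambda>p. \<rho> (snd p)) W"
    have "invariant_subspace H n \<rho> W"
      unfolding invariant_subspace_def
    proof (intro conjI ballI allI)
      fix g v assume g: "g \<in> carrier H" and v: "v \<in> W"
      have "(\<one>\<^bsub>G\<^esub>, g) \<in> carrier (G \<times>\<times> H)" using g by simp
      then show "\<rho> g *\<^sub>v v \<in> W" using W v unfolding invariant_subspace_def by fastforce
    qed (use W in \<open>auto simp: invariant_subspace_def\<close>)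
    then show "W = {0\<^sub>v n} \<or> W = carrier_vec n" by (rule irW)
  qed
  moreover have "(\<lambda>p. if p \<in> carrier (G \<times>\<times> H) then \<chi> (snd p) else 0) =
      (\<lambda>p. if p \<in> carrier (G \<times>\<times> H) then mat_trace (\<rho> (snd p)) else 0)"
    by (auto simp: ch)
  ultimately show ?thesis unfolding irr_char_def by blast
qed

lemma reduce_snd:
  assumes G: "group G" and H: "group H" and fG: "finite (carrier G)" and fH: "finite (carrier H)"
    and K: "subgroup K (G \<times>\<times> H)" and lc: "linear_char (G \<times>\<times> H) K lam"
    and nz: "(\<Sum>k\<in>K. lam k * cnj (\<chi> (snd k))) \<noteq> 0"
  shows "\<exists>\<mu> c. linear_char H (snd ` K) \<mu> \<and> c \<noteq> (0::complex) \<and>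
     (\<forall>\<alpha>. (\<Sum>k\<in>K. lam k * cnj (\<alpha> (snd k))) = c * (\<Sum>h\<in>snd ` K. \<mu> h * cnj (\<alpha> h)))"
proof -
  interpret G: group G by fact
  interpret H: group H by fact
  interpret GH: group "G \<times>\<times> H" by (rule DirProd_group[OF G H])
  have Ks: "K \<subseteq> carrier G \<times> carrier H" using subgroup.subset[OF K] by simp
  have fK: "finite K" using Ks fG fH finite_subset by blast
  have lnz: "\<And>k. k \<in> K \<Longrightarrow> lam k \<noteq> 0" and lm: "\<And>x y. x \<in> K \<Longrightarrow> y \<in> K \<Longrightarrow> lam (x \<otimes>\<^bsub>G \<times>\<times> H\<^esub> y) = lam x * lam y"
    using lc unfolding linear_char_def by auto
  have triv: "lam (b, \<one>\<^bsub>H\<^esub>) = 1" if b: "(b, \<one>\<^bsub>H\<^esub>) \<in> K" for b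
  proof (rule ccontr)
    assume ne: "lam (b, \<one>\<^bsub>H\<^esub>) \<noteq> 1"
    define f where "f k = lam k * cnj (\<chi> (snd k))" for k
    have "(\<Sum>k\<in>K. f k) = (\<Sum>k\<in>K. f ((b, \<one>\<^bsub>H\<^esub>) \<otimes>\<^bsub>G \<times>\<times> H\<^esub> k))"
      using GH.sum_subgroup_lmult[OF K b, of f] by simp
    also have "\<dots> = (\<Sum>k\<in>K. lam (b, \<one>\<^bsub>H\<^esub>) * f k)"
    proof (rule sum.cong[OF refl])
      fix k assume k: "k \<in> K"
      then have "snd k \<in> carrier H" using Ks by auto
      then show "f ((b, \<one>\<^bsub>H\<^esub>) \<otimes>\<^bsub>G \<times>\<times> H\<^esub> k) = lam (b, \<one>\<^bsub>H\<^esub>) * f k"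
        unfolding f_def using lm[OF b k] by (simp add: mult_DirProd')
    qed
    also have "\<dots> = lam (b, \<one>\<^bsub>H\<^esub>) * (\<Sum>k\<in>K. f k)" by (simp add: sum_distrib_left)
    finally have "(1 - lam (b, \<one>\<^bsub>H\<^esub>)) * (\<Sum>k\<in>K. f k) = 0" by (simp add: algebra_simps)
    then show False using ne nz unfolding f_def by simp
  qed
  have wd: "lam (a,h) = lam (b,h)" if ha: "(a,h) \<in> K" and hb: "(b,h) \<in> K" for h a b
  proof -
    have hc: "h \<in> carrier H" "a \<in> carrier G" "b \<in> carrier G" using ha hb Ks by auto
    define x where "x = (a,h) \<otimes>\<^bsub>G \<times>\<times> H\<^esub> inv\<^bsub>G \<times>\<times> H\<^esub> (b,h)"
    have xK: "x \<in> K" unfolding x_def using subgroup.m_closed[OF K ha subgroup.m_inv_closed[OF K hb]] .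
    have "x = (a \<otimes>\<^bsub>G\<^esub> inv\<^bsub>G\<^esub> b, \<one>\<^bsub>H\<^esub>)" unfolding x_def using hc by (simp add: inv_DirProd[OF G H])
    then have lx: "lam x = 1" using triv xK by simp
    have "(a,h) = x \<otimes>\<^bsub>G \<times>\<times> H\<^esub> (b,h)"
      unfolding x_def using GH.cancel_r1[of "(b,h)" "(a,h)"] hc by simp
    then have "lam (a,h) = lam x * lam (b,h)" using lm[OF xK hb] by simp
    then show ?thesis using lx by simp
  qed
  define \<mu> where "\<mu> h = lam (SOME b. (b,h) \<in> K, h)" for h
  have lmu: "lam k = \<mu> (snd k)" if k: "k \<in> K" for k
  proof -
    obtain h a where ka: "k = (a,h)" by (cases k)
    have s: "(SOME b. (b,h) \<in> K, h) \<in> K" using someI[of "\<lambda>b. (b,h) \<in> K" a] k ka by simp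
    have "lam (a,h) = lam (SOME b. (b,h) \<in> K, h)" using wd[OF _ s, of a] k ka by simp
    then show ?thesis unfolding \<mu>_def using ka by simp
  qed
  have linmu: "linear_char H (snd ` K) \<mu>"
    unfolding linear_char_def
  proof (intro conjI ballI)
    fix h assume "h \<in> snd ` K"
    then obtain k where kk: "k \<in> K" "h = snd k" by auto
    then show "\<mu> h \<noteq> 0" using lmu[OF kk(1)] lnz[OF kk(1)] by simp
  next
    fix x y assume "x \<in> snd ` K" "y \<in> snd ` K"
    then obtain a b where ab: "a \<in> K" "b \<in> K" "x = snd a" "y = snd b" by auto
    have abK: "a \<otimes>\<^bsub>G \<times>\<times> H\<^esub> b \<in> K" using subgroup.m_closed[OF K ab(1,2)] .
    have "snd (a \<otimes>\<^bsub>G \<times>\<times> H\<^esub> b) = x \<otimes>\<^bsub>H\<^esub> y" using ab by (simp add: mult_DirProd')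
    then show "\<mu> (x \<otimes>\<^bsub>H\<^esub> y) = \<mu> x * \<mu> y"
      using lmu[OF abK] lmu[OF ab(1)] lmu[OF ab(2)] lm[OF ab(1,2)] ab by simp
  qed
  define F where "F h = {k \<in> K. snd k = h}" for h
  have cardF: "card (F h) = card (F \<one>\<^bsub>H\<^esub>)" if h: "h \<in> snd ` K" for h
  proof -
    obtain a where a: "a \<in> K" "snd a = h" using h by auto
    have ac: "a \<in> carrier (G \<times>\<times> H)" using a Ks by auto
    have "F h = (\<lambda>k. a \<otimes>\<^bsub>G \<times>\<times> H\<^esub> k) ` F \<one>\<^bsub>H\<^esub>"
    proof
      show "(\<lambda>k. a \<otimes>\<^bsub>G \<times>\<times> H\<^esub> k) ` F \<one>\<^bsub>H\<^esub> \<subseteq> F h"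
      proof
        fix y assume "y \<in> (\<lambda>k. a \<otimes>\<^bsub>G \<times>\<times> H\<^esub> k) ` F \<one>\<^bsub>H\<^esub>"
        then obtain k where k: "k \<in> K" "snd k = \<one>\<^bsub>H\<^esub>" "y = a \<otimes>\<^bsub>G \<times>\<times> H\<^esub> k" unfolding F_def by auto
        have "y \<in> K" using subgroup.m_closed[OF K a(1) k(1)] k by simp
        moreover have "snd y = h" using k a Ks by (auto simp: mult_DirProd')
        ultimately show "y \<in> F h" unfolding F_def by simp
      qed
      show "F h \<subseteq> (\<lambda>k. a \<otimes>\<^bsub>G \<times>\<times> H\<^esub> k) ` F \<one>\<^bsub>H\<^esub>"
      proof
        fix y assume "y \<in> F h"
        then have y: "y \<in> K" "snd y = h" unfolding F_def by auto
        have yc: "y \<in> carrier (G \<times>\<times> H)" using y Ks by auto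
        define k where "k = inv\<^bsub>G \<times>\<times> H\<^esub> a \<otimes>\<^bsub>G \<times>\<times> H\<^esub> y"
        have kK: "k \<in> K" unfolding k_def using subgroup.m_closed[OF K subgroup.m_inv_closed[OF K a(1)] y(1)] .
        have "snd k = \<one>\<^bsub>H\<^esub>"
        proof -
          obtain a1 a2 where aa: "a = (a1,a2)" by (cases a)
          obtain y1 y2 where yy: "y = (y1,y2)" by (cases y)
          show ?thesis using aa yy a y ac yc unfolding k_def by (simp add: inv_DirProd[OF G H])
        qed
        moreover have "y = a \<otimes>\<^bsub>G \<times>\<times> H\<^esub> k" unfolding k_def using GH.cancel_l1[OF ac yc] by simp
        ultimately show "y \<in> (\<lambda>k. a \<otimes>\<^bsub>G \<times>\<times> H\<^esub> k) ` F \<one>\<^bsub>H\<^esub>" unfolding F_def using kK by auto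
      qed
    qed
    moreover have "inj_on (\<lambda>k. a \<otimes>\<^bsub>G \<times>\<times> H\<^esub> k) (F \<one>\<^bsub>H\<^esub>)"
    proof (rule inj_onI)
      fix x y assume "x \<in> F \<one>\<^bsub>H\<^esub>" "y \<in> F \<one>\<^bsub>H\<^esub>" and eq: "a \<otimes>\<^bsub>G \<times>\<times> H\<^esub> x = a \<otimes>\<^bsub>G \<times>\<times> H\<^esub> y"
      then have "x \<in> carrier (G \<times>\<times> H)" "y \<in> carrier (G \<times>\<times> H)" unfolding F_def using Ks by auto
      then show "x = y" using GH.l_cancel[OF eq _ _ ac] by blast
    qed
    ultimately show ?thesis by (simp add: card_image)
  qed
  define c where "c = card (F \<one>\<^bsub>H\<^esub>)"
  have "(\<one>\<^bsub>G\<^esub>, \<one>\<^bsub>H\<^esub>) \<in> F \<one>\<^bsub>H\<^esub>" unfolding F_def using subgroup.one_closed[OF K] by simp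
  moreover have "finite (F \<one>\<^bsub>H\<^esub>)" unfolding F_def using fK by simp
  ultimately have c0: "c > 0" unfolding c_def using card_gt_0_iff by blast
  have "(\<Sum>k\<in>K. lam k * cnj (\<alpha> (snd k))) = of_nat c * (\<Sum>h\<in>snd ` K. \<mu> h * cnj (\<alpha> h))" for \<alpha>
  proof -
    have "(\<Sum>k\<in>K. lam k * cnj (\<alpha> (snd k))) = (\<Sum>h\<in>snd ` K. \<Sum>k\<in>F h. lam k * cnj (\<alpha> (snd k)))"
      unfolding F_def by (rule sum.image_gen[OF fK])
    also have "\<dots> = (\<Sum>h\<in>snd ` K. \<Sum>k\<in>F h. \<mu> h * cnj (\<alpha> h))"
      by (intro sum.cong refl) (auto simp: F_def lmu)
    also have "\<dots> = (\<Sum>h\<in>snd ` K. of_nat c * (\<mu> h * cnj (\<alpha> h)))"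
      by (intro sum.cong refl) (simp add: cardF c_def)
    finally show ?thesis by (simp add: sum_distrib_left)
  qed
  with linmu c0 show ?thesis by (intro exI[of _ \<mu>] exI[of _ "of_nat c"]) auto
qed


lemma am_snd:
  assumes G: "group G" and H: "group H" and fG: "finite (carrier G)" and fH: "finite (carrier H)"
    and am: "almost_monomial (G \<times>\<times> H)"
  shows "almost_monomial H"
  unfolding almost_monomial_def
proof (intro allI impI)
  interpret G: group G by fact
  interpret H: group H by fact
  interpret GH: group "G \<times>\<times> H" by (rule DirProd_group[OF G H])
  have fGH: "finite (carrier (G \<times>\<times> H))" using fG fH by simp
  fix \<chi> \<psi> assume a: "irr_char H \<chi> \<and> irr_char H \<psi> \<and> \<chi> \<noteq> \<psi>"
  then have i1: "irr_char H \<chi>" and i2: "irr_char H \<psi>" and ne: "\<chi> \<noteq> \<psi>" by auto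
  define lift where "lift \<alpha> = (\<lambda>p. if p \<in> carrier (G \<times>\<times> H) then \<alpha> (snd p) else (0::complex))" for \<alpha>
  have l1: "irr_char (G \<times>\<times> H) (lift \<chi>)" unfolding lift_def by (rule irr_lift_snd[OF G H i1])
  have l2: "irr_char (G \<times>\<times> H) (lift \<psi>)" unfolding lift_def by (rule irr_lift_snd[OF G H i2])
  have lne: "lift \<chi> \<noteq> lift \<psi>"
  proof
    assume eq: "lift \<chi> = lift \<psi>"
    obtain g where g: "\<chi> g \<noteq> \<psi> g" using ne by auto
    then have gc: "g \<in> carrier H" using irr_zero[OF i1] irr_zero[OF i2] by force
    have "lift \<chi> (\<one>\<^bsub>G\<^esub>, g) = \<chi> g" "lift \<psi> (\<one>\<^bsub>G\<^esub>, g) = \<psi> g" using gc by (simp_all add: lift_def)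
    then show False using eq g by simp
  qed
  obtain K lam where K: "subgroup K (G \<times>\<times> H)" and lc: "linear_char (G \<times>\<times> H) K lam"
    and n1: "char_inner (G \<times>\<times> H) (induced (G \<times>\<times> H) K lam) (lift \<chi>) \<noteq> 0"
    and n2: "char_inner (G \<times>\<times> H) (induced (G \<times>\<times> H) K lam) (lift \<psi>) = 0"
    using am l1 l2 lne unfolding almost_monomial_def by blast
  have Ks: "K \<subseteq> carrier G \<times> carrier H" using subgroup.subset[OF K] by simp
  have fr: "char_inner (G \<times>\<times> H) (induced (G \<times>\<times> H) K lam) (lift \<alpha>) =
      (\<Sum>k\<in>K. lam k * cnj (\<alpha> (snd k))) / of_nat (card K)" if ia: "irr_char (G \<times>\<times> H) (lift \<alpha>)" for \<alpha>
  proof -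
    have "char_inner (G \<times>\<times> H) (induced (G \<times>\<times> H) K lam) (lift \<alpha>) =
      (\<Sum>k\<in>K. lam k * cnj (lift \<alpha> k)) / of_nat (card K)"
      by (rule GH.frobenius[OF fGH K GH.irr_class[OF ia]])
    also have "(\<Sum>k\<in>K. lam k * cnj (lift \<alpha> k)) = (\<Sum>k\<in>K. lam k * cnj (\<alpha> (snd k)))"
      using Ks by (intro sum.cong refl) (auto simp: lift_def)
    finally show ?thesis .
  qed
  have T1: "(\<Sum>k\<in>K. lam k * cnj (\<chi> (snd k))) \<noteq> 0" using n1 fr[OF l1] by auto
  have T2: "(\<Sum>k\<in>K. lam k * cnj (\<psi> (snd k))) = 0"
  proof -
    have "card K > 0" using subgroup.one_closed[OF K] fGH subgroup.subset[OF K] card_gt_0_iff finite_subset by blast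
    then show ?thesis using n2 fr[OF l2] by simp
  qed
  obtain \<mu> c where lmu: "linear_char H (snd ` K) \<mu>" and c: "c \<noteq> 0"
    and eqT: "\<And>\<alpha>. (\<Sum>k\<in>K. lam k * cnj (\<alpha> (snd k))) = c * (\<Sum>h\<in>snd ` K. \<mu> h * cnj (\<alpha> h))"
    using reduce_snd[OF G H fG fH K lc T1] by blast
  have S: "subgroup (snd ` K) H" by (rule subgroup_snd[OF G H K])
  have cS: "card (snd ` K) > 0" using subgroup.one_closed[OF S] subgroup.subset[OF S] fH card_gt_0_iff finite_subset by blast
  show "\<exists>S \<mu>. subgroup S H \<and> linear_char H S \<mu> \<and> char_inner H (induced H S \<mu>) \<chi> \<noteq> 0 \<and>
            char_inner H (induced H S \<mu>) \<psi> = 0"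
  proof (intro exI conjI)
    show "subgroup (snd ` K) H" by (rule S)
    show "linear_char H (snd ` K) \<mu>" by (rule lmu)
    show "char_inner H (induced H (snd ` K) \<mu>) \<chi> \<noteq> 0"
      using H.frobenius[OF fH S H.irr_class[OF i1]] T1 eqT[of \<chi>] cS by auto
    show "char_inner H (induced H (snd ` K) \<mu>) \<psi> = 0"
      using H.frobenius[OF fH S H.irr_class[OF i2]] T2 eqT[of \<psi>] c by auto
  qed
qed




theorem theorem2p3:
  fixes G :: "('a, 'b) monoid_scheme" and G' :: "('c, 'd) monoid_scheme"
  assumes "group G" and "group G'"
    and "finite (carrier G)" and "finite (carrier G')"
  shows "(almost_monomial G \<and> almost_monomial G') \<longleftrightarrow> almost_monomial (G \<times>\<times> G')"
  using dir_prod_am[OF assms] am_fst[OF assms] am_snd[OF assms] by blast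

end
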